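(* Suppose Assumption 1 holds with $\alpha\in(0,1]$ and let $(f_t)_{t\in\mathbb N}$ be the online gradient descent iterates. If the step sizes satisfy $$\sum_{t=1}^\infty\eta_t=\infty\qquad\text{and}\qquad\sum_{t=1}^\infty\eta_t^{1+\alpha}<\infty,$$ then $\lim_{t\to\infty}\mathcal E(f_t)=\mathcal E(f_H)$ almost surely.
   Context: Setting: Let $\mathcal X\subset\mathbb R^d$, $\mathcal Y\subset\mathbb R$, $\mathcal Z=\mathcal X\times\mathcal Y$, and let $\rho$ be a Borel probability measure on $\mathcal Z$. Let $K:\mathcal X\times\mathcal X\to\mathbb R$ be a continuous, symmetric, positive semi-definite kernel with reproducing kernel Hilbert space $H_K$ (inner product $\langle\cdot,\cdot\rangle$, norm $\|\cdot\|$), $K_x:=K(x,\cdot)$, reproducing property $f(x)=\langle f,K_x\rangle$, and $\kappa:=\sup_{x\in\mathcal X}\sqrt{K(x,x)}<\infty$. Let $\phi:\mathcal Y\times\mathbb R\to[0,\infty)$ be a loss function, differentiable in its second argument, and write $\phi'(y,s)$ for its derivative with respect to $s$. The generalization error of $f:\mathcal X\to\mathbb R$ is $\mathcal E(f)=\int_{\mathcal Z}\phi(y,f(x))\,d\rho(x,y)$. It is assumed that a minimizer $f_H\in\arg\min_{f\in H_K}\mathcal E(f)$ exists and that $\max\{\sup_{y\in\mathcal Y}\phi(y,0),\ \sup_{(x,y)\in\mathcal Z}\phi(y,f_H(x))\}<\infty$. Let $z_t=(x_t,y_t)$, $t\in\mathbb N$, be i.i.d. samples from $\rho$, let $(\eta_t)_{t\in\mathbb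 N}$ be positive step sizes, and define the online gradient descent iterates by $f_1=0$ and $f_{t+1}=f_t-\eta_t\phi'(y_t,f_t(x_t))K_{x_t}$ for $t\in\mathbb N$ (so $f_t$ depends only on $z_1,\dots,z_{t-1}$). Assumption 1: for every $y\in\mathcal Y$, $\phi(y,\cdot)$ is convex and differentiable, and there are constants $\alpha\in(0,1]$, $L>0$ with $|\phi'(y,s)-\phi'(y,\tilde s)|\le L|s-\tilde s|^{\alpha}$ for all $s,\tilde s\in\mathbb R$, $y\in\mathcal Y$. *)

theory Defs
  imports "HOL-Probability.Probability"
begin

text \<open>The RKHS H_K is represented through a feature map Phi into a real Hilbert space 'h
  with K x x' = inner (Phi x) (Phi x'); the element h of 'h represents the function
  x \<mapsto> inner h (Phi x), so K_x corresponds to Phi x.\<close>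

definition rkhs_fun :: "('a \<Rightarrow> 'h::real_inner) \<Rightarrow> 'h \<Rightarrow> 'a \<Rightarrow> real" where
  "rkhs_fun Phi h = (\<lambda>x. inner h (Phi x))"

definition gen_err :: "('a \<times> real) measure \<Rightarrow> (real \<Rightarrow> real \<Rightarrow> real) \<Rightarrow> ('a \<Rightarrow> real) \<Rightarrow> real" where
  "gen_err rho phi f = (\<integral>z. phi (snd z) (f (fst z)) \<partial>rho)"

text \<open>Online gradient descent iterates, 1-based as in the paper:
  ogd .. (Suc 0) = f_1 = 0 and ogd .. (Suc t) = f_{t+1} = f_t - eta_t phi'(y_t, f_t(x_t)) K_{x_t}
  for t >= 1, where z t = (x_t, y_t). The value at index 0 is an unused dummy (0).\<close>
primrec ogd :: "('a \<Rightarrow> 'h::real_inner) \<Rightarrow> (real \<Rightarrow> real \<Rightarrow> real) \<Rightarrow> (nat \<Rightarrow> real)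
    \<Rightarrow> (nat \<Rightarrow> 'a \<times> real) \<Rightarrow> nat \<Rightarrow> 'h" where
  "ogd Phi dphi eta z 0 = 0"
| "ogd Phi dphi eta z (Suc t) =
     (if t = 0 then 0
      else ogd Phi dphi eta z t
           - (eta t * dphi (snd (z t)) (inner (ogd Phi dphi eta z t) (Phi (fst (z t))))) *\<^sub>R Phi (fst (z t)))"

end

theory Submission
  imports Defs
begin


lemma det_lemma:
  fixes a e :: "nat \<Rightarrow> real" and C :: real
  assumes a0: "\<And>t. 0 \<le> a t" and e0: "\<And>t. 0 \<le> e t" and sa: "summable (\<lambda>t. e t * a t)"
    and ne: "\<not> summable e" and et: "e \<longlonglongrightarrow> 0" and C: "0 < C"
    and d: "\<And>t. a (Suc t) - a t \<le> C * e t"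
  shows "a \<longlonglongrightarrow> 0"
proof (rule LIMSEQ_I)
  fix r :: real assume r: "0 < r"
  define eps where "eps = r / 3"
  have eps: "0 < eps" using r by (simp add: eps_def)
  obtain N1 where N1: "\<And>t. t \<ge> N1 \<Longrightarrow> e t \<le> eps / (2 * C)"
  proof -
    have "0 < eps / (2 * C)" using eps C by simp
    from LIMSEQ_D[OF et this] obtain N where "\<forall>n\<ge>N. norm (e n - 0) < eps / (2 * C)" by blast
    then show ?thesis using that[of N] by force
  qed
  obtain N2 where N2: "\<And>m n. m \<ge> N2 \<Longrightarrow> norm (\<Sum>i\<in>{m..<n}. e i * a i) < eps\<^sup>2 / (2 * C)"
  proof -
    have "0 < eps\<^sup>2 / (2 * C)" using eps C by simp
    with sa[unfolded summable_Cauchy] obtain N where "\<forall>m\<ge>N. \<forall>n. norm (\<Sum>i\<in>{m..<n}. e i * a i) < eps\<^sup>2 / (2 * C)"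
      by blast
    then show ?thesis using that[of N] by blast
  qed
  define N where "N = max N1 N2"
  have "\<exists>s\<ge>N. a s < eps"
  proof (rule ccontr)
    assume "\<not> (\<exists>s\<ge>N. a s < eps)"
    then have ge: "\<And>t. t \<ge> N \<Longrightarrow> eps \<le> a t" by (auto simp: not_less)
    have "summable e"
    proof (rule summable_comparison_test'[of "\<lambda>t. e t * a t / eps" N])
      show "summable (\<lambda>t. e t * a t / eps)" using sa by (rule summable_divide)
      fix n assume n: "N \<le> n"
      have "e n * eps \<le> e n * a n" using ge[OF n] e0[of n] by (intro mult_left_mono) auto
      then show "norm (e n) \<le> e n * a n / eps" using eps e0[of n] by (simp add: field_simps)
    qed
    then show False using ne by simp
  qed
  then obtain s where s: "s \<ge> N" "a s < eps" by blast
  have bound: "a t \<le> 2 * eps" if t: "t \<ge> s" for t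
  proof (rule ccontr)
    assume "\<not> a t \<le> 2 * eps"
    then have at: "a t > 2 * eps" by simp
    define A where "A = {q\<in>{s..t}. a q < eps}"
    have Afin: "finite A" and As: "s \<in> A" using s t by (auto simp: A_def)
    define r0 where "r0 = Max A"
    have r0A: "r0 \<in> A" using Afin As unfolding r0_def by (intro Max_in) auto
    then have r0: "s \<le> r0" "r0 \<le> t" "a r0 < eps" by (auto simp: A_def)
    have r0t: "r0 < t" using r0 at eps by (metis le_neq_implies_less less_le_not_le mult_2 add_increasing2 less_imp_le)
    have big: "eps \<le> a q" if q: "r0 < q" "q \<le> t" for q
    proof (rule ccontr)
      assume "\<not> eps \<le> a q"
      then have "q \<in> A" using q r0 by (auto simp: A_def)
      then have "q \<le> r0" using Afin by (simp add: r0_def)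
      then show False using q by simp
    qed
    have "a t - a r0 = (\<Sum>q\<in>{r0..<t}. a (Suc q) - a q)" using sum_Suc_diff'[of r0 t a] r0t by simp
    also have "\<dots> \<le> (\<Sum>q\<in>{r0..<t}. C * e q)" by (intro sum_mono d)
    also have "\<dots> = C * e r0 + (\<Sum>q\<in>{Suc r0..<t}. C * e q)"
      using r0t by (subst sum.atLeast_Suc_lessThan) auto
    also have "(\<Sum>q\<in>{Suc r0..<t}. C * e q) \<le> (\<Sum>q\<in>{Suc r0..<t}. (C / eps) * (e q * a q))"
    proof (intro sum_mono)
      fix q assume "q \<in> {Suc r0..<t}"
      then have "eps \<le> a q" using big by auto
      then have "e q * eps \<le> e q * a q" using e0[of q] by (intro mult_left_mono) auto
      then have "e q \<le> e q * a q / eps" using eps by (simp add: field_simps)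
      then have "C * e q \<le> C * (e q * a q / eps)" using C by (intro mult_left_mono) auto
      then show "C * e q \<le> (C / eps) * (e q * a q)" by simp
    qed
    also have "\<dots> = (C / eps) * (\<Sum>q\<in>{Suc r0..<t}. e q * a q)" by (simp add: sum_distrib_left)
    also have "\<dots> \<le> (C / eps) * (eps\<^sup>2 / (2 * C))"
    proof (intro mult_left_mono)
      have "Suc r0 \<ge> N2" using s r0 by (simp add: N_def)
      from N2[OF this, of t] show "(\<Sum>q\<in>{Suc r0..<t}. e q * a q) \<le> eps\<^sup>2 / (2 * C)" by simp
    qed (use C eps in auto)
    also have "(C / eps) * (eps\<^sup>2 / (2 * C)) = eps / 2" using C eps by (simp add: field_simps power2_eq_square)
    also have "C * e r0 \<le> C * (eps / (2 * C))" using N1[of r0] s r0 C by (intro mult_left_mono) (auto simp: N_def)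
    also have "C * (eps / (2 * C)) = eps / 2" using C by simp
    finally have "a t - a r0 \<le> eps" by simp
    then show False using at r0 by simp
  qed
  show "\<exists>no. \<forall>n\<ge>no. norm (a n - 0) < r"
  proof (intro exI[of _ s] allI impI)
    fix n assume "s \<le> n"
    then have "a n \<le> 2 * eps" by (rule bound)
    then show "norm (a n - 0) < r" using a0[of n] r by (simp add: eps_def)
  qed
qed



locale ogd_set =
  fixes X :: "'a::euclidean_space set" and Y :: "real set"
    and rho :: "('a \<times> real) measure"
    and K :: "'a \<Rightarrow> 'a \<Rightarrow> real" and Phi :: "'a \<Rightarrow> 'h::{real_inner, complete_space}"
    and phi dphi :: "real \<Rightarrow> real \<Rightarrow> real"
    and alpha L :: real
    and fH :: 'h
    and P :: "'w measure" and Z :: "nat \<Rightarrow> 'w \<Rightarrow> 'a \<times> real"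
    and eta :: "nat \<Rightarrow> real"
  assumes rho_space: "space rho = X \<times> Y"
    and rho_sets: "sets rho = sets (restrict_space borel (X \<times> Y))"
    and rho_prob: "prob_space rho"
    and K_feature: "\<forall>x\<in>X. \<forall>x'\<in>X. K x x' = inner (Phi x) (Phi x')"
    and K_cont: "continuous_on (X \<times> X) (\<lambda>(x, x'). K x x')"
    and kappa_fin: "bdd_above ((\<lambda>x. sqrt (K x x)) ` X)"
    and phi_nonneg: "\<forall>y\<in>Y. \<forall>s. 0 \<le> phi y s"
    and phi_meas: "(\<lambda>(y, s). phi y s) \<in> borel_measurable (restrict_space borel (Y \<times> UNIV))"
    and phi_deriv: "\<forall>y\<in>Y. \<forall>s. (phi y has_real_derivative dphi y s) (at s)"
    and phi_convex: "\<forall>y\<in>Y. convex_on UNIV (phi y)"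
    and alpha: "0 < alpha" "alpha \<le> 1" and L_pos: "0 < L"
    and holder: "\<forall>y\<in>Y. \<forall>s s'. \<bar>dphi y s - dphi y s'\<bar> \<le> L * \<bar>s - s'\<bar> powr alpha"
    and fH_min: "\<forall>h. gen_err rho phi (rkhs_fun Phi fH) \<le> gen_err rho phi (rkhs_fun Phi h)"
    and phi0_bdd: "bdd_above ((\<lambda>y. phi y 0) ` Y)"
    and phifH_bdd: "bdd_above ((\<lambda>(x, y). phi y (rkhs_fun Phi fH x)) ` (X \<times> Y))"
    and P_prob: "prob_space P"
    and Z_indep: "prob_space.indep_vars P (\<lambda>_. rho) Z {1..}"
    and Z_distr: "\<forall>t\<ge>1. distr P rho (Z t) = rho"
    and eta_pos: "\<forall>t\<ge>1. 0 < eta t"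
    and eta_div: "\<not> summable (\<lambda>t. eta (t + 1))"
    and eta_sum: "summable (\<lambda>t. eta (t + 1) powr (1 + alpha))"
begin

lemma taylor_up:
  assumes y: "y \<in> Y"
  shows "phi y (s + u) \<le> phi y s + dphi y s * u + L * \<bar>u\<bar> powr (1 + alpha)"
proof -
  have D: "\<And>x. DERIV (phi y) x :> dphi y x" using phi_deriv y by auto
  have H: "\<And>a b. \<bar>dphi y a - dphi y b\<bar> \<le> L * \<bar>a - b\<bar> powr alpha" using holder y by auto
  have key: "\<And>xi. \<bar>xi - s\<bar> \<le> \<bar>u\<bar> \<Longrightarrow> dphi y xi * u \<le> dphi y s * u + L * \<bar>u\<bar> powr (1 + alpha)"
  proof -
    fix xi assume xi: "\<bar>xi - s\<bar> \<le> \<bar>u\<bar>"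
    have "(dphi y xi - dphi y s) * u \<le> \<bar>dphi y xi - dphi y s\<bar> * \<bar>u\<bar>"
      by (metis abs_ge_self abs_mult)
    also have "\<dots> \<le> (L * \<bar>xi - s\<bar> powr alpha) * \<bar>u\<bar>"
      using H[of xi s] by (intro mult_right_mono) auto
    also have "\<dots> \<le> (L * \<bar>u\<bar> powr alpha) * \<bar>u\<bar>"
      using xi L_pos alpha by (intro mult_right_mono mult_left_mono powr_mono2) auto
    also have "\<dots> = L * \<bar>u\<bar> powr (1 + alpha)"
      by (cases "u = 0") (auto simp: powr_add)
    finally show "dphi y xi * u \<le> dphi y s * u + L * \<bar>u\<bar> powr (1 + alpha)"
      by (simp add: algebra_simps)
  qed
  consider "u = 0" | "u > 0" | "u < 0" by linarith
  then show ?thesis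
  proof cases
    case 1 then show ?thesis using L_pos by simp
  next
    case 2
    obtain xi where xi: "s < xi" "xi < s + u" "phi y (s + u) - phi y s = (s + u - s) * dphi y xi"
      using MVT2[of s "s + u" "phi y" "dphi y"] 2 D by auto
    have "\<bar>xi - s\<bar> \<le> \<bar>u\<bar>" using xi 2 by auto
    from key[OF this] xi show ?thesis by (simp add: algebra_simps)
  next
    case 3
    obtain xi where xi: "s + u < xi" "xi < s" "phi y s - phi y (s + u) = (s - (s + u)) * dphi y xi"
      using MVT2[of "s + u" s "phi y" "dphi y"] 3 D by auto
    have "\<bar>xi - s\<bar> \<le> \<bar>u\<bar>" using xi 3 by auto
    from key[OF this] xi show ?thesis by (simp add: algebra_simps)
  qed
qed

definition "cself = 2 * (2 * L) powr (1 / alpha)"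

lemma cself_pos: "cself > 0" using L_pos by (simp add: cself_def)

lemma self_bound:
  assumes y: "y \<in> Y"
  shows "(dphi y s)\<^sup>2 \<le> 1 + cself * phi y s"
proof -
  let ?g = "dphi y s"
  have nn: "\<And>s. 0 \<le> phi y s" using phi_nonneg y by auto
  show ?thesis
  proof (cases "\<bar>?g\<bar> \<le> 1")
    case True
    then have "?g\<^sup>2 \<le> 1" by (simp add: abs_square_le_1)
    moreover have "0 \<le> cself * phi y s" using cself_pos nn[of s] by simp
    ultimately show ?thesis by linarith
  next
    case False
    then have g1: "\<bar>?g\<bar> > 1" by simp
    define r where "r = (\<bar>?g\<bar> / (2 * L)) powr (1 / alpha)"
    have rpos: "r > 0" using g1 L_pos by (simp add: r_def)
    have ra: "r powr alpha = \<bar>?g\<bar> / (2 * L)"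
      unfolding r_def using alpha g1 L_pos by (simp add: powr_powr)
    define u where "u = - sgn ?g * r"
    have au: "\<bar>u\<bar> = r" using g1 rpos by (auto simp: u_def abs_mult sgn_if)
    have gu: "?g * u = - \<bar>?g\<bar> * r" by (auto simp: u_def sgn_if)
    have "0 \<le> phi y (s + u)" by (rule nn)
    also have "\<dots> \<le> phi y s + ?g * u + L * \<bar>u\<bar> powr (1 + alpha)" by (rule taylor_up[OF y])
    also have "L * \<bar>u\<bar> powr (1 + alpha) = L * r * r powr alpha"
      using au rpos by (simp add: powr_add)
    also have "\<dots> = \<bar>?g\<bar> * r / 2" using ra L_pos by (simp add: field_simps)
    finally have A: "\<bar>?g\<bar> * r \<le> 2 * phi y s" using gu by (simp only: mult.commute)
    have "r = \<bar>?g\<bar> powr (1/alpha) / (2 * L) powr (1 / alpha)"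
      unfolding r_def using g1 L_pos by (simp add: powr_divide)
    then have B: "\<bar>?g\<bar> * r * cself = 2 * \<bar>?g\<bar> * \<bar>?g\<bar> powr (1/alpha)"
      unfolding cself_def using L_pos by (simp add: field_simps)
    have "\<bar>?g\<bar> powr 1 \<le> \<bar>?g\<bar> powr (1/alpha)"
      using g1 alpha by (intro powr_mono) (auto simp: field_simps)
    then have C: "\<bar>?g\<bar> \<le> \<bar>?g\<bar> powr (1/alpha)" using g1 by simp
    have "?g\<^sup>2 = \<bar>?g\<bar> * \<bar>?g\<bar>" by (simp add: power2_eq_square)
    also have "\<dots> \<le> \<bar>?g\<bar> * \<bar>?g\<bar> powr (1/alpha)" using C g1 by (intro mult_left_mono) auto
    also have "\<dots> = \<bar>?g\<bar> * r * cself / 2" using B by (simp add: field_simps) (metis)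
    also have "\<dots> \<le> 2 * phi y s * cself / 2" using A cself_pos
      by (intro divide_right_mono mult_right_mono) auto
    also have "\<dots> = cself * phi y s" by simp
    finally show ?thesis by simp
  qed
qed

lemma powr_le_1_plus: "0 \<le> (a::real) \<Longrightarrow> a powr alpha \<le> 1 + a"
proof (cases "a \<le> 1")
  case True
  assume "0 \<le> a" then show ?thesis using True alpha
    by (metis add_increasing2 powr_le_one_le less_le_not_le zero_le_one powr_eq_0_iff order.trans linorder_le_cases powr_mono2 powr_one_eq_one)
next
  case False
  then have "a powr alpha \<le> a powr 1" using alpha by (intro powr_mono) auto
  then show ?thesis using False by simp
qed

definition "B0 = max 0 (SOME b. \<forall>y\<in>Y. phi y 0 \<le> b)"
lemma B0: "y \<in> Y \<Longrightarrow> phi y 0 \<le> B0" "0 \<le> B0"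
proof -
  have "\<exists>b. \<forall>y\<in>Y. phi y 0 \<le> b" using phi0_bdd by (auto simp: bdd_above_def)
  then have "\<forall>y\<in>Y. phi y 0 \<le> (SOME b. \<forall>y\<in>Y. phi y 0 \<le> b)" by (rule someI_ex)
  then show "y \<in> Y \<Longrightarrow> phi y 0 \<le> B0" "0 \<le> B0" unfolding B0_def by force+
qed

definition "BH = max 0 (SOME b. \<forall>x\<in>X. \<forall>y\<in>Y. phi y (inner fH (Phi x)) \<le> b)"
lemma BH: "x \<in> X \<Longrightarrow> y \<in> Y \<Longrightarrow> phi y (inner fH (Phi x)) \<le> BH" "0 \<le> BH"
proof -
  have "\<exists>b. \<forall>x\<in>X. \<forall>y\<in>Y. phi y (inner fH (Phi x)) \<le> b" using phifH_bdd
    by (auto simp: bdd_above_def rkhs_fun_def)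
  then have "\<forall>x\<in>X. \<forall>y\<in>Y. phi y (inner fH (Phi x)) \<le> (SOME b. \<forall>x\<in>X. \<forall>y\<in>Y. phi y (inner fH (Phi x)) \<le> b)" by (rule someI_ex)
  then show "x \<in> X \<Longrightarrow> y \<in> Y \<Longrightarrow> phi y (inner fH (Phi x)) \<le> BH" "0 \<le> BH" unfolding BH_def by force+
qed

definition "kap = max 0 (SOME b. \<forall>x\<in>X. sqrt (K x x) \<le> b)"
lemma kap: "x \<in> X \<Longrightarrow> norm (Phi x) \<le> kap" "0 \<le> kap"
proof -
  have "\<exists>b. \<forall>x\<in>X. sqrt (K x x) \<le> b" using kappa_fin by (auto simp: bdd_above_def)
  then have "\<forall>x\<in>X. sqrt (K x x) \<le> (SOME b. \<forall>x\<in>X. sqrt (K x x) \<le> b)" by (rule someI_ex)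
  moreover have "x \<in> X \<Longrightarrow> norm (Phi x) = sqrt (K x x)" using K_feature by (simp add: norm_eq_sqrt_inner)
  ultimately show "x \<in> X \<Longrightarrow> norm (Phi x) \<le> kap" "0 \<le> kap" unfolding kap_def by force+
qed

lemma eval_bound: "x \<in> X \<Longrightarrow> \<bar>inner f (Phi x)\<bar> \<le> norm f * kap"
  using Cauchy_Schwarz_ineq2[of f "Phi x"] kap(1)[of x] by (meson mult_left_mono norm_ge_zero order.trans)

definition "G0 = B0 + L"

lemma dphi0: assumes y: "y \<in> Y" shows "\<bar>dphi y 0\<bar> \<le> G0"
proof -
  let ?g = "dphi y 0"
  have "0 \<le> phi y (0 + - sgn ?g)" using phi_nonneg y by auto
  also have "\<dots> \<le> phi y 0 + ?g * (- sgn ?g) + L * \<bar>- sgn ?g\<bar> powr (1 + alpha)" by (rule taylor_up[OF y])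
  also have "\<dots> \<le> B0 - \<bar>?g\<bar> + L"
    using B0(1)[OF y] L_pos by (cases "?g = 0") (auto simp: sgn_if abs_if)
  finally show ?thesis by (simp add: G0_def)
qed

lemma dphi_growth: assumes y: "y \<in> Y" shows "\<bar>dphi y s\<bar> \<le> G0 + L + L * \<bar>s\<bar>"
proof -
  have "\<bar>dphi y s - dphi y 0\<bar> \<le> L * \<bar>s - 0\<bar> powr alpha" using holder y by blast
  also have "\<dots> \<le> L * (1 + \<bar>s\<bar>)" using L_pos powr_le_1_plus[of "\<bar>s\<bar>"] by (intro mult_left_mono) auto
  finally show ?thesis using dphi0[OF y] by (simp add: algebra_simps)
qed

lemma phi_lip: assumes y: "y \<in> Y" and a: "\<bar>a\<bar> \<le> R" and b: "\<bar>b\<bar> \<le> R"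
  shows "\<bar>phi y a - phi y b\<bar> \<le> (G0 + L + L * R) * \<bar>a - b\<bar>"
proof -
  have D: "\<And>x. DERIV (phi y) x :> dphi y x" using phi_deriv y by auto
  have *: "\<And>u v. \<bar>u\<bar> \<le> R \<Longrightarrow> \<bar>v\<bar> \<le> R \<Longrightarrow> u < v \<Longrightarrow> \<bar>phi y v - phi y u\<bar> \<le> (G0 + L + L * R) * \<bar>v - u\<bar>"
  proof -
    fix u v :: real assume u: "\<bar>u\<bar> \<le> R" and v: "\<bar>v\<bar> \<le> R" and uv: "u < v"
    obtain xi where xi: "u < xi" "xi < v" "phi y v - phi y u = (v - u) * dphi y xi"
      using MVT2[of u v "phi y" "dphi y"] uv D by auto
    have "\<bar>xi\<bar> \<le> R" using xi u v by auto
    then have "\<bar>dphi y xi\<bar> \<le> G0 + L + L * R" using dphi_growth[OF y, of xi] L_pos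
      by (smt (z3) mult_left_mono)
    then show "\<bar>phi y v - phi y u\<bar> \<le> (G0 + L + L * R) * \<bar>v - u\<bar>"
      using xi uv by (simp add: abs_mult mult.commute mult_right_mono)
  qed
  consider "a = b" | "a < b" | "b < a" by linarith
  then show ?thesis
  proof cases
    case 1 then show ?thesis by simp
  next
    case 2 then show ?thesis using *[OF a b] by (simp add: abs_minus_commute)
  next
    case 3 then show ?thesis using *[OF b a] by (simp add: abs_minus_commute)
  qed
qed

lemma phi_upper: assumes y: "y \<in> Y" shows "phi y s \<le> B0 + (G0 + L + L * \<bar>s\<bar>) * \<bar>s\<bar>"
  using phi_lip[OF y, of s "\<bar>s\<bar>" 0] B0(1)[OF y] by (simp add: algebra_simps)

lemma convex_tangent: assumes y: "y \<in> Y"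
  shows "phi y b - phi y a \<ge> dphi y a * (b - a)"
proof -
  have "convex_on UNIV (phi y)" using phi_convex y by auto
  moreover have "(phi y has_field_derivative dphi y a) (at a within UNIV)" using phi_deriv y by auto
  ultimately show ?thesis by (intro convex_on_imp_above_tangent) auto
qed


abbreviation "F w t \<equiv> ogd Phi dphi eta w t"

lemma eta_nonneg: "1 \<le> t \<Longrightarrow> 0 \<le> eta t" using eta_pos by force

lemma ogd_1[simp]: "F w (Suc 0) = 0" by simp

lemma ogd_step: "1 \<le> t \<Longrightarrow> F w (Suc t) = F w t -
   (eta t * dphi (snd (w t)) (inner (F w t) (Phi (fst (w t))))) *\<^sub>R Phi (fst (w t))"
  by simp

lemma ogd_local: "(\<And>i. 1 \<le> i \<Longrightarrow> i < t \<Longrightarrow> w i = w' i) \<Longrightarrow> F w t = F w' t"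
proof (induction t)
  case 0 then show ?case by simp
next
  case (Suc t)
  show ?case
  proof (cases "t = 0")
    case True then show ?thesis by simp
  next
    case False
    then have "F w t = F w' t" using Suc by auto
    moreover have "w t = w' t" using Suc.prems False by auto
    ultimately show ?thesis by simp
  qed
qed

primrec bnd :: "nat \<Rightarrow> real" where
  "bnd 0 = 0"
| "bnd (Suc t) = (if t = 0 then 0 else bnd t + eta t * kap * (G0 + L + L * kap * bnd t))"

lemma G0_nonneg: "0 \<le> G0" using B0(2) L_pos by (simp add: G0_def)

lemma step_norm:
  assumes t: "1 \<le> t" and w: "w t \<in> X \<times> Y"
  shows "norm (F w (Suc t) - F w t) \<le> eta t * kap * (G0 + L + L * kap * norm (F w t))"
proof -
  obtain x y where xy: "w t = (x, y)" "x \<in> X" "y \<in> Y" using w by auto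
  let ?s = "inner (F w t) (Phi x)"
  have "norm (F w (Suc t) - F w t) = eta t * \<bar>dphi y ?s\<bar> * norm (Phi x)"
    using ogd_step[OF t, of w] xy eta_nonneg[OF t] by (simp add: abs_mult)
  also have "\<dots> \<le> eta t * (G0 + L + L * (norm (F w t) * kap)) * kap"
  proof (intro mult_mono mult_left_mono)
    show "\<bar>dphi y ?s\<bar> \<le> G0 + L + L * (norm (F w t) * kap)"
      using dphi_growth[OF xy(3), of ?s] eval_bound[OF xy(2), of "F w t"] L_pos
      by (meson add_left_mono mult_left_mono order.trans less_imp_le)
  qed (use kap(1)[of x] kap(2) xy eta_nonneg[OF t] G0_nonneg L_pos in auto)
  finally show ?thesis by (simp add: algebra_simps)
qed

lemma bnd_mono: "1 \<le> t \<Longrightarrow> bnd t \<le> bnd (Suc t)" and bnd_nonneg: "0 \<le> bnd t"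
proof -
  have "0 \<le> bnd t" for t
  proof (induction t)
    case (Suc t) then show ?case using eta_nonneg[of t] kap(2) G0_nonneg L_pos
      by (auto intro!: add_nonneg_nonneg mult_nonneg_nonneg)
  qed simp
  then show "0 \<le> bnd t" .
  assume "1 \<le> t"
  then show "bnd t \<le> bnd (Suc t)" using \<open>\<And>t. 0 \<le> bnd t\<close>[of t] eta_nonneg[of t] kap(2) G0_nonneg L_pos
    by (auto intro!: mult_nonneg_nonneg)
qed

lemma ogd_bnd:
  assumes "\<And>i. 1 \<le> i \<Longrightarrow> i < t \<Longrightarrow> w i \<in> X \<times> Y"
  shows "norm (F w t) \<le> bnd t"
  using assms
proof (induction t)
  case 0 then show ?case by simp
next
  case (Suc t)
  show ?case
  proof (cases "t = 0")
    case True then show ?thesis by simp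
  next
    case False
    then have t: "1 \<le> t" by simp
    have IH: "norm (F w t) \<le> bnd t" using Suc by auto
    have "norm (F w (Suc t)) \<le> norm (F w t) + norm (F w (Suc t) - F w t)"
      by (metis add.commute diff_add_cancel norm_triangle_ineq)
    also have "\<dots> \<le> bnd t + eta t * kap * (G0 + L + L * kap * bnd t)"
      using step_norm[OF t, of w] Suc.prems[of t] IH t eta_nonneg[OF t] kap(2) L_pos
      by (smt (z3) mult_left_mono mult_nonneg_nonneg lessI)
    finally show ?thesis using False by simp
  qed
qed

definition "MM = kap\<^sup>2 * (1 + cself * BH)"
definition "beta t = 2 * eta t - kap\<^sup>2 * cself * (eta t)\<^sup>2"

lemma V_step:
  assumes t: "1 \<le> t" and w: "w t = (x, y)" and x: "x \<in> X" and y: "y \<in> Y"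
  shows "(norm (F w (Suc t) - fH))\<^sup>2 \<le> (norm (F w t - fH))\<^sup>2
     - beta t * (phi y (inner (F w t) (Phi x)) - phi y (inner fH (Phi x))) + (eta t)\<^sup>2 * MM"
proof -
  let ?e = "eta t" and ?a = "F w t - fH" and ?s = "inner (F w t) (Phi x)" and ?h = "inner fH (Phi x)"
  let ?g = "dphi y ?s"
  let ?D = "phi y ?s - phi y ?h"
  have e: "0 \<le> ?e" by (rule eta_nonneg[OF t])
  have eq: "F w (Suc t) - fH = ?a - (?e * ?g) *\<^sub>R Phi x" using ogd_step[OF t, of w] w by simp
  have E: "(norm (F w (Suc t) - fH))\<^sup>2 = (norm ?a)\<^sup>2 - 2 * ?e * (?g * (?s - ?h)) + ?e\<^sup>2 * (?g\<^sup>2 * inner (Phi x) (Phi x))"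
    unfolding eq power2_norm_eq_inner by (simp add: inner_diff_left inner_diff_right inner_commute power2_eq_square algebra_simps)
  have C: "?g * (?s - ?h) \<ge> ?D" using convex_tangent[OF y, of ?s ?h] by (simp add: algebra_simps)
  have S: "?g\<^sup>2 \<le> 1 + cself * ?D + cself * BH"
  proof -
    have "cself * phi y ?h \<le> cself * BH" using BH(1)[OF x y] cself_pos by (simp add: mult_left_mono)
    then show ?thesis using self_bound[OF y, of ?s] by (simp add: algebra_simps)
  qed
  have N: "inner (Phi x) (Phi x) \<le> kap\<^sup>2" using kap(1)[of x] kap(2) x
    by (metis norm_ge_zero power2_norm_eq_inner power_mono)
  have "?g\<^sup>2 * inner (Phi x) (Phi x) \<le> ?g\<^sup>2 * kap\<^sup>2" using N by (simp add: mult_left_mono)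
  also have "\<dots> \<le> (1 + cself * ?D + cself * BH) * kap\<^sup>2" using S by (simp add: mult_right_mono)
  finally have T: "?g\<^sup>2 * inner (Phi x) (Phi x) \<le> (1 + cself * ?D + cself * BH) * kap\<^sup>2" .
  have "?e\<^sup>2 * (?g\<^sup>2 * inner (Phi x) (Phi x)) \<le> ?e\<^sup>2 * ((1 + cself * ?D + cself * BH) * kap\<^sup>2)"
    using T by (simp add: mult_left_mono)
  moreover have "2 * ?e * (?g * (?s - ?h)) \<ge> 2 * ?e * ?D" using C e by (simp add: mult_left_mono)
  ultimately show ?thesis unfolding E beta_def MM_def by (simp add: algebra_simps)
qed

end


context ogd_set
begin

lemma Phi_cont: "continuous_on X Phi"
proof -
  have KC: "continuous_on (X \<times> X) (\<lambda>p. K (fst p) (snd p))" using K_cont by (simp add: case_prod_beta')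
  show ?thesis unfolding continuous_on_def
  proof (intro ballI)
    fix x0 assume x0: "x0 \<in> X"
    let ?q = "\<lambda>x. K x x - 2 * K x x0 + K x0 x0"
    have c1: "continuous_on X (\<lambda>x. K x x)"
    proof -
      have "continuous_on X ((\<lambda>p. K (fst p) (snd p)) \<circ> (\<lambda>x. (x, x)))"
        by (rule continuous_on_compose) (auto intro!: continuous_intros continuous_on_subset[OF KC])
      then show ?thesis by (simp add: comp_def)
    qed
    have c2: "continuous_on X (\<lambda>x. K x x0)"
    proof -
      have "continuous_on X ((\<lambda>p. K (fst p) (snd p)) \<circ> (\<lambda>x. (x, x0)))"
        by (rule continuous_on_compose) (use x0 in \<open>auto intro!: continuous_intros continuous_on_subset[OF KC]\<close>)
      then show ?thesis by (simp add: comp_def)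
    qed
    have "continuous_on X ?q" by (intro continuous_intros c1 c2)
    then have "(?q \<longlongrightarrow> ?q x0) (at x0 within X)" using x0 continuous_on_def by blast
    then have Q: "(?q \<longlongrightarrow> 0) (at x0 within X)" by simp
    have eq: "\<forall>\<^sub>F x in at x0 within X. (norm (Phi x - Phi x0))\<^sup>2 = ?q x"
      unfolding eventually_at_filter using x0 K_feature
      by (intro always_eventually) (auto simp: power2_norm_eq_inner inner_diff_left inner_diff_right inner_commute)
    have "((\<lambda>x. (norm (Phi x - Phi x0))\<^sup>2) \<longlongrightarrow> 0) (at x0 within X)"
      using Q eq by (simp add: tendsto_cong)
    then have "((\<lambda>x. sqrt ((norm (Phi x - Phi x0))\<^sup>2)) \<longlongrightarrow> sqrt 0) (at x0 within X)"
      by (intro tendsto_intros)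
    then have "((\<lambda>x. norm (Phi x - Phi x0)) \<longlongrightarrow> 0) (at x0 within X)" by simp
    then show "(Phi \<longlongrightarrow> Phi x0) (at x0 within X)" unfolding Lim_null[of Phi] using tendsto_norm_zero_iff by blast
  qed
qed


lemma meas_rho_borel: "f \<in> measurable M rho \<Longrightarrow> f \<in> borel_measurable M \<and> f \<in> space M \<rightarrow> X \<times> Y"
proof -
  assume "f \<in> measurable M rho"
  then have "f \<in> measurable M (restrict_space borel (X \<times> Y))"
    using measurable_cong_sets[of M M rho "restrict_space borel (X \<times> Y)"] rho_sets by simp
  then show ?thesis by (simp add: measurable_restrict_space2_iff)
qed

lemma meas_rho:
  assumes f: "f \<in> measurable M rho"
  shows "(\<lambda>m. fst (f m)) \<in> borel_measurable M" "(\<lambda>m. snd (f m)) \<in> borel_measurable M"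
    "m \<in> space M \<Longrightarrow> fst (f m) \<in> X" "m \<in> space M \<Longrightarrow> snd (f m) \<in> Y"
proof -
  have fb: "f \<in> borel_measurable M" and fs: "f \<in> space M \<rightarrow> X \<times> Y" using meas_rho_borel[OF f] by auto
  have "f \<in> measurable M (borel \<Otimes>\<^sub>M borel)" using fb by (simp add: borel_prod)
  then show "(\<lambda>m. fst (f m)) \<in> borel_measurable M" "(\<lambda>m. snd (f m)) \<in> borel_measurable M"
    by (auto intro: measurable_fst' measurable_snd')
  show "m \<in> space M \<Longrightarrow> fst (f m) \<in> X" using funcset_mem[OF fs] by (auto simp: mem_Times_iff)
  show "m \<in> space M \<Longrightarrow> snd (f m) \<in> Y" using funcset_mem[OF fs] by (auto simp: mem_Times_iff)
qed

lemma cont_comp_meas: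
  fixes g :: "'b::topological_space \<Rightarrow> 'c::topological_space"
  assumes g: "continuous_on A g" and a: "a \<in> borel_measurable M" and aA: "\<And>m. m \<in> space M \<Longrightarrow> a m \<in> A"
  shows "(\<lambda>m. g (a m)) \<in> borel_measurable M"
proof -
  have "a \<in> measurable M (restrict_space borel A)" using a aA by (intro measurable_restrict_space2) auto
  from measurable_compose[OF this borel_measurable_continuous_on_restrict[OF g]] show ?thesis by simp
qed

lemma K_meas:
  assumes a: "a \<in> borel_measurable M" and b: "b \<in> borel_measurable M"
    and aX: "\<And>m. m \<in> space M \<Longrightarrow> a m \<in> X" and bX: "\<And>m. m \<in> space M \<Longrightarrow> b m \<in> X"
  shows "(\<lambda>m. K (a m) (b m)) \<in> borel_measurable M"
  using cont_comp_meas[OF K_cont, of "\<lambda>m. (a m, b m)" M] a b aX bX by auto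

lemma evalH_meas:
  assumes a: "a \<in> borel_measurable M" and aX: "\<And>m. m \<in> space M \<Longrightarrow> a m \<in> X"
  shows "(\<lambda>m. inner h (Phi (a m))) \<in> borel_measurable M"
proof -
  have "continuous_on X (\<lambda>x. inner h (Phi x))" by (intro continuous_intros Phi_cont)
  from cont_comp_meas[OF this a aX] show ?thesis .
qed

lemma phi_comp_meas:
  assumes y: "y \<in> borel_measurable M" and s: "s \<in> borel_measurable M" and yY: "\<And>m. m \<in> space M \<Longrightarrow> y m \<in> Y"
  shows "(\<lambda>m. phi (y m) (s m)) \<in> borel_measurable M"
proof -
  have "(\<lambda>m. (y m, s m)) \<in> measurable M (restrict_space borel (Y \<times> UNIV))"
    using y s yY by (intro measurable_restrict_space2) auto
  from measurable_compose[OF this phi_meas] show ?thesis by simp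
qed

lemma deriv_seq: assumes "DERIV f x :> D"
  shows "(\<lambda>n. (f (x + 1 / Suc n) - f x) / (1 / Suc n)) \<longlonglongrightarrow> D"
proof -
  have L: "(\<lambda>h. (f (x + h) - f x) / h) \<midarrow>0\<rightarrow> D" using DERIV_D[OF assms] .
  have S: "filterlim (\<lambda>n. 1 / real (Suc n)) (at 0) sequentially"
  proof (rule tendsto_imp_filterlim_at_right[THEN filterlim_mono])
    show "(\<lambda>n. 1 / real (Suc n)) \<longlonglongrightarrow> 0" by (rule LIMSEQ_Suc[OF lim_const_over_n])
    show "\<forall>\<^sub>F n in sequentially. 1 / real (Suc n) > 0" by simp
  qed (auto simp: at_le)
  show ?thesis using filterlim_compose[OF L S] by simp
qed

lemma dphi_comp_meas:
  assumes y: "y \<in> borel_measurable M" and s: "s \<in> borel_measurable M" and yY: "\<And>m. m \<in> space M \<Longrightarrow> y m \<in> Y"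
  shows "(\<lambda>m. dphi (y m) (s m)) \<in> borel_measurable M"
proof (rule borel_measurable_LIMSEQ_real)
  fix m assume m: "m \<in> space M"
  show "(\<lambda>n. (phi (y m) (s m + 1 / Suc n) - phi (y m) (s m)) / (1 / Suc n)) \<longlonglongrightarrow> dphi (y m) (s m)"
    using phi_deriv yY[OF m] by (intro deriv_seq) auto
next
  fix n
  have "(\<lambda>m. phi (y m) (s m + 1 / Suc n)) \<in> borel_measurable M"
    using y s yY by (intro phi_comp_meas) auto
  moreover have "(\<lambda>m. phi (y m) (s m)) \<in> borel_measurable M" using y s yY by (intro phi_comp_meas) auto
  ultimately show "(\<lambda>m. (phi (y m) (s m + 1 / Suc n) - phi (y m) (s m)) / (1 / Suc n)) \<in> borel_measurable M"
    by measurable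
qed


lemma meas_eqI: "(\<And>m. m \<in> space M \<Longrightarrow> f m = g m) \<Longrightarrow> g \<in> borel_measurable M \<Longrightarrow> f \<in> borel_measurable M"
  by (subst measurable_cong[where g=g]) auto

definition coef :: "(nat \<Rightarrow> 'a \<times> real) \<Rightarrow> nat \<Rightarrow> real" where
  "coef w j = eta j * dphi (snd (w j)) (inner (F w j) (Phi (fst (w j))))"

lemma ogd_rep: "F w t = - (\<Sum>j\<in>{1..<t}. coef w j *\<^sub>R Phi (fst (w j)))"
proof (induction t)
  case 0 then show ?case by simp
next
  case (Suc t)
  show ?case
  proof (cases "t = 0")
    case True then show ?thesis by simp
  next
    case False
    then have "{1..<Suc t} = insert t {1..<t}" by auto
    then show ?thesis using Suc False by (simp add: coef_def)
  qed
qed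

lemma ogd_eval:
  assumes "\<And>j. 1 \<le> j \<Longrightarrow> j < t \<Longrightarrow> fst (w j) \<in> X" and x: "x \<in> X"
  shows "inner (F w t) (Phi x) = - (\<Sum>j\<in>{1..<t}. coef w j * K (fst (w j)) x)"
  unfolding ogd_rep[of w t] using assms K_feature
  by (simp add: inner_sum_left)

lemma coef_meas:
  assumes "\<And>j. 1 \<le> j \<Longrightarrow> j < t \<Longrightarrow> (\<lambda>m. w m j) \<in> measurable M rho"
  shows "1 \<le> j \<Longrightarrow> j < t \<Longrightarrow> (\<lambda>m. coef (w m) j) \<in> borel_measurable M"
  using assms
proof (induction t arbitrary: j)
  case 0 then show ?case by simp
next
  case (Suc t)
  show ?case
  proof (cases "j < t")
    case True then show ?thesis using Suc by auto
  next
    case False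
    then have jt: "j = t" using Suc by auto
    have wt: "(\<lambda>m. w m t) \<in> measurable M rho" using Suc.prems jt by auto
    have IH: "\<And>i. 1 \<le> i \<Longrightarrow> i < t \<Longrightarrow> (\<lambda>m. coef (w m) i) \<in> borel_measurable M"
      using Suc by auto
    have wi: "\<And>i. 1 \<le> i \<Longrightarrow> i < t \<Longrightarrow> (\<lambda>m. w m i) \<in> measurable M rho" using Suc.prems by auto
    have eq: "\<And>m. m \<in> space M \<Longrightarrow> coef (w m) t = eta t * dphi (snd (w m t))
         (- (\<Sum>i\<in>{1..<t}. coef (w m) i * K (fst (w m i)) (fst (w m t))))"
      unfolding coef_def[of "w _" t] using meas_rho(3)[OF wi] meas_rho(3)[OF wt]
      by (subst ogd_eval) auto
    have "(\<lambda>m. eta t * dphi (snd (w m t))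
         (- (\<Sum>i\<in>{1..<t}. coef (w m) i * K (fst (w m i)) (fst (w m t))))) \<in> borel_measurable M"
    proof (intro borel_measurable_times borel_measurable_const dphi_comp_meas borel_measurable_uminus borel_measurable_sum)
      show "(\<lambda>m. snd (w m t)) \<in> borel_measurable M" by (rule meas_rho(2)[OF wt])
      show "\<And>m. m \<in> space M \<Longrightarrow> snd (w m t) \<in> Y" by (rule meas_rho(4)[OF wt])
      fix i assume "i \<in> {1..<t}"
      then have i: "1 \<le> i" "i < t" by auto
      show "(\<lambda>m. coef (w m) i) \<in> borel_measurable M" using IH[OF i] .
      show "(\<lambda>m. K (fst (w m i)) (fst (w m t))) \<in> borel_measurable M"
        using meas_rho[OF wi[OF i]] meas_rho[OF wt] by (intro K_meas) auto
    qed
    then show ?thesis using jt meas_eqI[OF eq] by simp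
  qed
qed

lemma eval_meas:
  assumes w: "\<And>j. 1 \<le> j \<Longrightarrow> j < t \<Longrightarrow> (\<lambda>m. w m j) \<in> measurable M rho"
    and a: "a \<in> borel_measurable M" and aX: "\<And>m. m \<in> space M \<Longrightarrow> a m \<in> X"
  shows "(\<lambda>m. inner (F (w m) t) (Phi (a m))) \<in> borel_measurable M"
proof -
  have eq: "\<And>m. m \<in> space M \<Longrightarrow> inner (F (w m) t) (Phi (a m)) = - (\<Sum>j\<in>{1..<t}. coef (w m) j * K (fst (w m j)) (a m))"
    using meas_rho(3)[OF w] aX by (intro ogd_eval) auto
  have "(\<lambda>m. - (\<Sum>j\<in>{1..<t}. coef (w m) j * K (fst (w m j)) (a m))) \<in> borel_measurable M"
  proof (intro borel_measurable_uminus borel_measurable_sum borel_measurable_times)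
    fix j assume "j \<in> {1..<t}"
    then have j: "1 \<le> j" "j < t" by auto
    show "(\<lambda>m. coef (w m) j) \<in> borel_measurable M" using coef_meas[OF w j] .
    show "(\<lambda>m. K (fst (w m j)) (a m)) \<in> borel_measurable M"
      using meas_rho[OF w[OF j]] a aX by (intro K_meas) auto
  qed
  then show ?thesis using meas_eqI[OF eq] by simp
qed

lemma V_meas:
  assumes w: "\<And>j. 1 \<le> j \<Longrightarrow> j < t \<Longrightarrow> (\<lambda>m. w m j) \<in> measurable M rho"
  shows "(\<lambda>m. (norm (F (w m) t - fH))\<^sup>2) \<in> borel_measurable M"
proof -
  have eq: "(norm (F (w m) t - fH))\<^sup>2 =
     - (\<Sum>j\<in>{1..<t}. coef (w m) j * inner (F (w m) t) (Phi (fst (w m j))))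
     + 2 * (\<Sum>j\<in>{1..<t}. coef (w m) j * inner fH (Phi (fst (w m j)))) + inner fH fH" for m
  proof -
    have A: "inner (F (w m) t) (F (w m) t) = - (\<Sum>j\<in>{1..<t}. coef (w m) j * inner (F (w m) t) (Phi (fst (w m j))))"
      by (subst (2) ogd_rep) (simp add: inner_sum_right)
    have B: "inner (F (w m) t) fH = - (\<Sum>j\<in>{1..<t}. coef (w m) j * inner fH (Phi (fst (w m j))))"
      by (subst ogd_rep) (simp add: inner_sum_left inner_sum_right inner_commute)
    show ?thesis unfolding power2_norm_eq_inner using A B
      by (simp add: inner_diff_left inner_diff_right inner_commute)
  qed
  show ?thesis unfolding eq
  proof (intro borel_measurable_add borel_measurable_uminus borel_measurable_sum borel_measurable_times borel_measurable_const)
    fix j assume "j \<in> {1..<t}"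
    then have j: "1 \<le> j" "j < t" by auto
    show "(\<lambda>m. coef (w m) j) \<in> borel_measurable M" using coef_meas[OF w j] .
    show "(\<lambda>m. inner (F (w m) t) (Phi (fst (w m j)))) \<in> borel_measurable M"
      using meas_rho[OF w[OF j]] by (intro eval_meas[OF w]) auto
    show "(\<lambda>m. inner fH (Phi (fst (w m j)))) \<in> borel_measurable M"
      using meas_rho[OF w[OF j]] by (intro evalH_meas) auto
  qed (use coef_meas[OF w] in auto)
qed

end


context ogd_set
begin

lemma rho_ps: "prob_space rho" by (rule rho_prob)

definition "loss h z = phi (snd z) (inner h (Phi (fst z)))"

lemma gen_err_loss: "gen_err rho phi (rkhs_fun Phi h) = (\<integral>z. loss h z \<partial>rho)"
  by (simp add: gen_err_def rkhs_fun_def loss_def)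

lemma id_rho: "(\<lambda>z. z) \<in> measurable rho rho" by (rule measurable_ident_sets) simp

lemma rho_mem: "z \<in> space rho \<Longrightarrow> fst z \<in> X \<and> snd z \<in> Y"
  by (metis rho_space mem_Times_iff)

lemma loss_meas: "loss h \<in> borel_measurable rho"
proof -
  have "(\<lambda>z. phi (snd z) (inner h (Phi (fst z)))) \<in> borel_measurable rho"
  proof (intro phi_comp_meas evalH_meas)
    show "(\<lambda>z. snd z) \<in> borel_measurable rho" using meas_rho(2)[OF id_rho] .
    show "(\<lambda>z. fst z) \<in> borel_measurable rho" using meas_rho(1)[OF id_rho] .
    show "\<And>z. z \<in> space rho \<Longrightarrow> snd z \<in> Y" using rho_mem by blast
    show "\<And>z. z \<in> space rho \<Longrightarrow> fst z \<in> X" using rho_mem by blast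
  qed
  then show ?thesis by (simp add: loss_def[abs_def])
qed

lemma loss_bound: assumes z: "z \<in> space rho" and h: "norm h \<le> R"
  shows "0 \<le> loss h z" "loss h z \<le> B0 + (G0 + L + L * (R * kap)) * (R * kap)"
proof -
  have x: "fst z \<in> X" and y: "snd z \<in> Y" using rho_mem[OF z] by auto
  have s: "\<bar>inner h (Phi (fst z))\<bar> \<le> R * kap"
    using eval_bound[OF x, of h] h kap(2) by (meson mult_right_mono order.trans)
  show "0 \<le> loss h z" using phi_nonneg y by (simp add: loss_def)
  have "loss h z \<le> B0 + (G0 + L + L * \<bar>inner h (Phi (fst z))\<bar>) * \<bar>inner h (Phi (fst z))\<bar>"
    unfolding loss_def by (rule phi_upper[OF y])
  also have "\<dots> \<le> B0 + (G0 + L + L * (R * kap)) * (R * kap)"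
  proof -
    have c: "0 \<le> G0 + L + L * (R * kap)" using G0_nonneg L_pos kap(2) h norm_ge_zero[of h]
      by (metis add_nonneg_nonneg less_imp_le mult_nonneg_nonneg order.trans)
    have "(G0 + L + L * \<bar>inner h (Phi (fst z))\<bar>) \<le> G0 + L + L * (R * kap)"
      using s L_pos by simp
    then show ?thesis using s c by (simp add: mult_mono)
  qed
  finally show "loss h z \<le> B0 + (G0 + L + L * (R * kap)) * (R * kap)" .
qed

lemma loss_integrable: "integrable rho (loss h)"
proof -
  interpret rho: prob_space rho by (rule rho_prob)
  show ?thesis
  proof (rule rho.integrable_const_bound[where B="B0 + (G0 + L + L * (norm h * kap)) * (norm h * kap)"])
    show "AE z in rho. norm (loss h z) \<le> B0 + (G0 + L + L * (norm h * kap)) * (norm h * kap)"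
    proof (intro AE_I2)
      fix z assume "z \<in> space rho"
      from loss_bound[OF this, of h "norm h"] show "norm (loss h z) \<le> B0 + (G0 + L + L * (norm h * kap)) * (norm h * kap)"
        by simp
    qed
  qed (rule loss_meas)
qed

lemma gen_err_lip:
  assumes h1: "norm h1 \<le> R" and h2: "norm h2 \<le> R"
  shows "\<bar>gen_err rho phi (rkhs_fun Phi h1) - gen_err rho phi (rkhs_fun Phi h2)\<bar>
     \<le> (G0 + L + L * (R * kap)) * kap * norm (h1 - h2)"
proof -
  interpret rho: prob_space rho by (rule rho_prob)
  let ?C = "(G0 + L + L * (R * kap)) * kap * norm (h1 - h2)"
  have "\<bar>(\<integral>z. loss h1 z \<partial>rho) - (\<integral>z. loss h2 z \<partial>rho)\<bar> = \<bar>\<integral>z. loss h1 z - loss h2 z \<partial>rho\<bar>"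
    using Bochner_Integration.integral_diff[OF loss_integrable loss_integrable, of h1 h2] by simp
  also have "\<dots> \<le> (\<integral>z. \<bar>loss h1 z - loss h2 z\<bar> \<partial>rho)" by (rule integral_abs_bound)
  also have "\<dots> \<le> (\<integral>z. ?C \<partial>rho)"
  proof (rule integral_mono)
    show "integrable rho (\<lambda>z. \<bar>loss h1 z - loss h2 z\<bar>)" using loss_integrable by auto
    fix z assume z: "z \<in> space rho"
    have x: "fst z \<in> X" and y: "snd z \<in> Y" using rho_mem[OF z] by auto
    have s1: "\<bar>inner h1 (Phi (fst z))\<bar> \<le> R * kap"
      using eval_bound[OF x, of h1] h1 kap(2) by (meson mult_right_mono order.trans)
    have s2: "\<bar>inner h2 (Phi (fst z))\<bar> \<le> R * kap"
      using eval_bound[OF x, of h2] h2 kap(2) by (meson mult_right_mono order.trans)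
    have d: "\<bar>inner h1 (Phi (fst z)) - inner h2 (Phi (fst z))\<bar> \<le> norm (h1 - h2) * kap"
      using eval_bound[OF x, of "h1 - h2"] by (simp add: inner_diff_left)
    have "\<bar>loss h1 z - loss h2 z\<bar> \<le> (G0 + L + L * (R * kap)) * \<bar>inner h1 (Phi (fst z)) - inner h2 (Phi (fst z))\<bar>"
      unfolding loss_def by (rule phi_lip[OF y s1 s2])
    also have "\<dots> \<le> (G0 + L + L * (R * kap)) * (norm (h1 - h2) * kap)"
    proof (rule mult_left_mono[OF d])
      show "0 \<le> G0 + L + L * (R * kap)" using G0_nonneg L_pos kap(2) h1 norm_ge_zero[of h1]
        by (metis add_nonneg_nonneg less_imp_le mult_nonneg_nonneg order.trans)
    qed
    finally show "\<bar>loss h1 z - loss h2 z\<bar> \<le> ?C" by (simp add: ac_simps)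
  qed simp
  also have "\<dots> = ?C" using rho.prob_space by simp
  finally show ?thesis by (simp add: gen_err_loss)
qed

end


context ogd_set
begin

abbreviation "SS t \<equiv> PiM {1..<t} (\<lambda>_. rho)"
definition "W t \<omega> = restrict (\<lambda>i. Z i \<omega>) {1..<t}"

lemma P_ps: "prob_space P" by (rule P_prob)

lemma Z_meas: "1 \<le> t \<Longrightarrow> Z t \<in> measurable P rho"
  using Z_indep P_prob unfolding prob_space.indep_vars_def[OF P_prob] by auto

lemma W_meas: "W t \<in> measurable P (SS t)"
  unfolding W_def by (intro measurable_restrict) (auto intro: Z_meas)

abbreviation "SSt t \<equiv> PiM {t} (\<lambda>_. rho)"
definition "Wt t \<omega> = restrict (\<lambda>i. Z i \<omega>) {t}"

lemma W_indep: assumes t: "1 \<le> t" shows "prob_space.indep_var P (SS t) (W t) (SSt t) (Wt t)"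
proof -
  interpret P: prob_space P by (rule P_prob)
  show ?thesis unfolding W_def Wt_def
    using t by (intro P.indep_var_restrict[OF Z_indep]) auto
qed

lemma Wt_meas: "1 \<le> t \<Longrightarrow> Wt t \<in> measurable P (SSt t)"
  unfolding Wt_def by (intro measurable_restrict) (auto intro: Z_meas)

lemma W_space: "\<omega> \<in> space P \<Longrightarrow> W t \<omega> \<in> space (SS t)"
  by (rule measurable_space[OF W_meas])

lemma Z_space: "1 \<le> t \<Longrightarrow> \<omega> \<in> space P \<Longrightarrow> Z t \<omega> \<in> X \<times> Y"
proof -
  assume "1 \<le> t" "\<omega> \<in> space P"
  then have "Z t \<omega> \<in> space rho" by (intro measurable_space[OF Z_meas])
  then show ?thesis by (simp only: rho_space)
qed

lemma SS_mem: "w \<in> space (SS t) \<Longrightarrow> 1 \<le> i \<Longrightarrow> i < t \<Longrightarrow> w i \<in> X \<times> Y"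
  unfolding space_PiM rho_space[symmetric] by (simp add: PiE_iff)

lemma indep_integral:
  fixes h :: "(nat \<Rightarrow> 'a \<times> real) \<times> ('a \<times> real) \<Rightarrow> real"
  assumes t: "1 \<le> t" and h: "h \<in> borel_measurable (SS t \<Otimes>\<^sub>M rho)"
    and hb: "\<And>p. p \<in> space (SS t \<Otimes>\<^sub>M rho) \<Longrightarrow> \<bar>h p\<bar> \<le> B"
  shows "(\<integral>\<omega>. h (W t \<omega>, Z t \<omega>) \<partial>P) = (\<integral>\<omega>. (\<integral>z. h (W t \<omega>, z) \<partial>rho) \<partial>P)"
proof -
  interpret P: prob_space P by (rule P_prob)
  interpret rho: prob_space rho by (rule rho_prob)
  let ?D = "distr P (SS t) (W t)"
  let ?E = "distr P (SSt t) (Wt t)"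
  let ?e = "\<lambda>z. restrict (\<lambda>_. z) {t} :: nat \<Rightarrow> 'a \<times> real"
  interpret D: prob_space ?D by (rule P.prob_space_distr[OF W_meas])
  interpret E: prob_space ?E by (rule P.prob_space_distr[OF Wt_meas[OF t]])
  interpret DR: pair_prob_space ?D ?E ..
  let ?h = "\<lambda>p. h (fst p, snd p t)"
  have eq: "?D \<Otimes>\<^sub>M ?E = distr P (SS t \<Otimes>\<^sub>M SSt t) (\<lambda>x. (W t x, Wt t x))"
    using W_indep[OF t] unfolding P.indep_var_distribution_eq by auto
  have em: "?e \<in> measurable rho (SSt t)" by (intro measurable_restrict) auto
  have Wt_eq: "Wt t = ?e \<circ> Z t" by (auto simp: Wt_def fun_eq_iff)
  have Edistr: "?E = distr rho (SSt t) ?e"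
    unfolding Wt_eq using Z_meas[OF t] em Z_distr t by (subst distr_distr[symmetric]) auto
  have WZ: "(\<lambda>x. (W t x, Wt t x)) \<in> measurable P (SS t \<Otimes>\<^sub>M SSt t)"
    using W_meas Wt_meas[OF t] by (rule measurable_Pair)
  have pm: "(\<lambda>p. (fst p, snd p t)) \<in> measurable (SS t \<Otimes>\<^sub>M SSt t) (SS t \<Otimes>\<^sub>M rho)"
    by (intro measurable_Pair measurable_fst measurable_compose[OF measurable_snd measurable_component_singleton]) auto
  have hh: "?h \<in> borel_measurable (SS t \<Otimes>\<^sub>M SSt t)"
    using measurable_compose[OF pm h] by simp
  have sets_eq: "sets (?D \<Otimes>\<^sub>M ?E) = sets (SS t \<Otimes>\<^sub>M SSt t)"
    by (intro sets_pair_measure_cong) auto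
  have hD: "?h \<in> borel_measurable (?D \<Otimes>\<^sub>M ?E)"
    using hh measurable_cong_sets[OF sets_eq refl] by simp
  have sp: "space (?D \<Otimes>\<^sub>M ?E) = space (SS t \<Otimes>\<^sub>M SSt t)" using sets_eq_imp_space_eq[OF sets_eq] .
  have hb': "\<And>p. p \<in> space (SS t \<Otimes>\<^sub>M SSt t) \<Longrightarrow> \<bar>?h p\<bar> \<le> B"
    using hb measurable_space[OF pm] by blast
  have int: "integrable (?D \<Otimes>\<^sub>M ?E) ?h"
    using hD hb' sp by (intro DR.P.integrable_const_bound[where B=B]) (auto intro!: AE_I2)
  have "(\<integral>\<omega>. h (W t \<omega>, Z t \<omega>) \<partial>P) = (\<integral>\<omega>. ?h (W t \<omega>, Wt t \<omega>) \<partial>P)"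
    by (simp add: Wt_def)
  also have "\<dots> = (\<integral>p. ?h p \<partial>distr P (SS t \<Otimes>\<^sub>M SSt t) (\<lambda>x. (W t x, Wt t x)))"
    by (rule integral_distr[symmetric, OF WZ hh])
  also have "\<dots> = (\<integral>p. ?h p \<partial>(?D \<Otimes>\<^sub>M ?E))" unfolding eq by (rule refl)
  also have "\<dots> = (\<integral>w. (\<integral>v. h (w, v t) \<partial>?E) \<partial>?D)" using DR.integral_fst'[OF int] by simp
  also have "\<dots> = (\<integral>w. (\<integral>z. h (w, z) \<partial>rho) \<partial>?D)"
  proof (rule Bochner_Integration.integral_cong[OF refl])
    fix w assume "w \<in> space ?D"
    have "(\<lambda>v. h (w, v t)) \<in> borel_measurable (SSt t)"
      using measurable_compose[OF measurable_Pair1'[of w "SS t" "SSt t"] hh] \<open>w \<in> space ?D\<close> by simp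
    then show "(\<integral>v. h (w, v t) \<partial>?E) = (\<integral>z. h (w, z) \<partial>rho)"
      unfolding Edistr by (subst integral_distr[OF em]) auto
  qed
  also have "\<dots> = (\<integral>\<omega>. (\<integral>z. h (W t \<omega>, z) \<partial>rho) \<partial>P)"
  proof (rule integral_distr[OF W_meas])
    show "(\<lambda>w. \<integral>z. h (w, z) \<partial>rho) \<in> borel_measurable (SS t)"
      using h by (intro rho.borel_measurable_lebesgue_integral) simp
  qed
  finally show ?thesis .
qed

end


context ogd_set
begin

definition "zs \<omega> = (\<lambda>i. Z i \<omega>)"
definition "Vr t \<omega> = (norm (F (zs \<omega>) t - fH))\<^sup>2"
definition "ge h = gen_err rho phi (rkhs_fun Phi h)"
definition "ar t \<omega> = ge (F (zs \<omega>) t) - ge fH"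
definition adapted :: "nat \<Rightarrow> ('w \<Rightarrow> real) \<Rightarrow> bool" where "adapted t G \<longleftrightarrow> (\<exists>g \<in> borel_measurable (SS t). \<forall>\<omega>\<in>space P. G \<omega> = g (W t \<omega>))"

lemma F_W: "F (zs \<omega>) t = F (W t \<omega>) t"
  by (rule ogd_local) (simp add: W_def zs_def)

lemma zs_meas: "1 \<le> j \<Longrightarrow> (\<lambda>m. zs m j) \<in> measurable P rho"
  unfolding zs_def by (rule Z_meas)

lemma zs_mem: "\<omega> \<in> space P \<Longrightarrow> 1 \<le> i \<Longrightarrow> zs \<omega> i \<in> X \<times> Y"
  unfolding zs_def by (rule Z_space)

lemma comp_SS: "1 \<le> j \<Longrightarrow> j < t \<Longrightarrow> (\<lambda>m. m j) \<in> measurable (SS t) rho"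
  by (rule measurable_component_singleton) auto

lemma F_bnd: "\<omega> \<in> space P \<Longrightarrow> norm (F (zs \<omega>) t) \<le> bnd t"
  by (rule ogd_bnd) (rule zs_mem)

lemma F_bnd_SS: "w \<in> space (SS t) \<Longrightarrow> norm (F w t) \<le> bnd t"
  by (rule ogd_bnd) (rule SS_mem)

lemma ge_nonneg: "0 \<le> ge h"
proof -
  have "0 \<le> (\<integral>z. loss h z \<partial>rho)" using loss_bound(1)[of _ h "norm h"] by (intro integral_nonneg_AE AE_I2) auto
  then show ?thesis by (simp add: ge_def gen_err_loss)
qed

definition "LB R = B0 + (G0 + L + L * (R * kap)) * (R * kap)"

lemma ge_bound: "norm h \<le> R \<Longrightarrow> ge h \<le> LB R"
proof -
  interpret rho: prob_space rho by (rule rho_prob)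
  assume h: "norm h \<le> R"
  have "(\<integral>z. loss h z \<partial>rho) \<le> (\<integral>z. LB R \<partial>rho)"
    using loss_bound(2)[OF _ h] loss_integrable by (intro integral_mono) (auto simp: LB_def)
  then show ?thesis using rho.prob_space by (simp add: ge_def gen_err_loss)
qed

lemma ar_nonneg: "0 \<le> ar t \<omega>"
  using fH_min by (simp add: ar_def ge_def)

lemma Vr_meas: "Vr t \<in> borel_measurable P"
  unfolding Vr_def[abs_def] by (rule V_meas) (rule zs_meas)

lemma Vr_bound: "\<omega> \<in> space P \<Longrightarrow> 0 \<le> Vr t \<omega> \<and> Vr t \<omega> \<le> (bnd t + norm fH)\<^sup>2"
proof -
  assume w: "\<omega> \<in> space P"
  have "norm (F (zs \<omega>) t - fH) \<le> bnd t + norm fH"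
    using F_bnd[OF w, of t] norm_triangle_ineq4[of "F (zs \<omega>) t" fH] by linarith
  then show ?thesis unfolding Vr_def by (simp add: power_mono)
qed

lemma adapted_meas: "adapted t G \<Longrightarrow> G \<in> borel_measurable P"
proof -
  assume "adapted t G"
  then obtain g where g: "g \<in> borel_measurable (SS t)" and eq: "\<forall>\<omega>\<in>space P. G \<omega> = g (W t \<omega>)"
    by (auto simp: adapted_def)
  have "(\<lambda>\<omega>. g (W t \<omega>)) \<in> borel_measurable P" using measurable_compose[OF W_meas g] .
  then show ?thesis using eq meas_eqI by metis
qed

lemma adapted_mono: assumes "adapted t G" "t \<le> s" shows "adapted s G"
proof -
  obtain g where g: "g \<in> borel_measurable (SS t)" and eq: "\<forall>\<omega>\<in>space P. G \<omega> = g (W t \<omega>)"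
    using assms by (auto simp: adapted_def)
  have r: "(\<lambda>w. restrict w {1..<t}) \<in> measurable (SS s) (SS t)"
    using assms by (intro measurable_restrict_subset) auto
  have "\<And>\<omega>. W t \<omega> = restrict (W s \<omega>) {1..<t}" using assms by (auto simp: W_def fun_eq_iff)
  then show ?thesis unfolding adapted_def using measurable_compose[OF r g] eq by auto
qed

lemma adapted_const: "adapted t (\<lambda>_. c)"
  unfolding adapted_def by (intro bexI[of _ "\<lambda>_. c"]) auto

lemma adapted_mult: fixes G1 G2 :: "'w \<Rightarrow> real" shows "adapted t G1 \<Longrightarrow> adapted t G2 \<Longrightarrow> adapted t (\<lambda>\<omega>. G1 \<omega> * G2 \<omega>)"
  unfolding adapted_def
  by (elim bexE, rule_tac x="\<lambda>w. g w * ga w" in bexI) (auto intro: borel_measurable_times)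

lemma adapted_comp: "adapted t G \<Longrightarrow> f \<in> borel_measurable borel \<Longrightarrow> adapted t (\<lambda>\<omega>. f (G \<omega>))"
  unfolding adapted_def
  by (elim bexE, rule_tac x="\<lambda>w. f (g w)" in bexI) (auto intro: measurable_compose)

lemma Vr_adapted: "adapted t (Vr t)"
proof -
  have "(\<lambda>w. (norm (F w t - fH))\<^sup>2) \<in> borel_measurable (SS t)"
    using V_meas[of t "\<lambda>m. m" "SS t"] comp_SS by simp
  then show ?thesis unfolding adapted_def Vr_def using F_W by auto
qed

lemma lossF_meas: "(\<lambda>p. loss (F (fst p) t) (snd p)) \<in> borel_measurable (SS t \<Otimes>\<^sub>M rho)"
proof -
  have sp: "\<And>p. p \<in> space (SS t \<Otimes>\<^sub>M rho) \<Longrightarrow> fst (snd p) \<in> X \<and> snd (snd p) \<in> Y"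
    using rho_mem by (auto simp: space_pair_measure)
  have sm: "(\<lambda>p. snd p) \<in> measurable (SS t \<Otimes>\<^sub>M rho) rho" by simp
  have fm: "\<And>j. 1 \<le> j \<Longrightarrow> j < t \<Longrightarrow> (\<lambda>p. fst p j) \<in> measurable (SS t \<Otimes>\<^sub>M rho) rho"
    using comp_SS by (intro measurable_compose[OF measurable_fst]) auto
  show ?thesis unfolding loss_def
  proof (intro phi_comp_meas eval_meas)
    show "(\<lambda>p. snd (snd p)) \<in> borel_measurable (SS t \<Otimes>\<^sub>M rho)" using meas_rho(2)[OF sm] .
    show "(\<lambda>p. fst (snd p)) \<in> borel_measurable (SS t \<Otimes>\<^sub>M rho)" using meas_rho(1)[OF sm] .
  qed (use sp fm in auto)
qed

lemma ge_F_eq: "ge (F w t) = (\<integral>z. loss (F w t) z \<partial>rho)" by (simp add: ge_def gen_err_loss)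

lemma ar_adapted: "adapted t (ar t)"
proof -
  interpret rho: prob_space rho by (rule rho_prob)
  have "(\<lambda>w. \<integral>z. loss (F w t) z \<partial>rho) \<in> borel_measurable (SS t)"
    using lossF_meas[of t] by (intro rho.borel_measurable_lebesgue_integral) simp
  then have "(\<lambda>w. ge (F w t) - ge fH) \<in> borel_measurable (SS t)" unfolding ge_F_eq by simp
  then show ?thesis unfolding adapted_def ar_def using F_W by auto
qed

end


context ogd_set
begin

lemma bdd_int: fixes f :: "'w \<Rightarrow> real" shows "f \<in> borel_measurable P \<Longrightarrow> (\<And>\<omega>. \<omega> \<in> space P \<Longrightarrow> \<bar>f \<omega>\<bar> \<le> B) \<Longrightarrow> integrable P f"
proof -
  interpret P: prob_space P by (rule P_prob)
  assume "f \<in> borel_measurable P" "\<And>\<omega>. \<omega> \<in> space P \<Longrightarrow> \<bar>f \<omega>\<bar> \<le> B"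
  then show ?thesis by (intro P.integrable_const_bound[where B=B]) (auto intro!: AE_I2)
qed

definition "h0 t p = loss (F (fst p) t) (snd p) - loss fH (snd p)"
definition "Dr t \<omega> = loss (F (zs \<omega>) t) (Z t \<omega>) - loss fH (Z t \<omega>)"

lemma h0_meas: "h0 t \<in> borel_measurable (SS t \<Otimes>\<^sub>M rho)"
proof -
  have "(\<lambda>p. loss fH (snd p)) \<in> borel_measurable (SS t \<Otimes>\<^sub>M rho)"
    using measurable_compose[OF measurable_snd loss_meas] .
  then show ?thesis unfolding h0_def[abs_def] using lossF_meas by (intro borel_measurable_diff) auto
qed

lemma h0_bound: "p \<in> space (SS t \<Otimes>\<^sub>M rho) \<Longrightarrow> \<bar>h0 t p\<bar> \<le> LB (bnd t) + LB (norm fH)"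
proof -
  assume p: "p \<in> space (SS t \<Otimes>\<^sub>M rho)"
  then have w: "fst p \<in> space (SS t)" and z: "snd p \<in> space rho" by (auto simp: space_pair_measure)
  have a: "0 \<le> loss (F (fst p) t) (snd p)" "loss (F (fst p) t) (snd p) \<le> LB (bnd t)"
    using loss_bound[OF z F_bnd_SS[OF w]] by (auto simp: LB_def)
  have b: "0 \<le> loss fH (snd p)" "loss fH (snd p) \<le> LB (norm fH)"
    using loss_bound[OF z, of fH "norm fH"] by (auto simp: LB_def)
  show ?thesis unfolding h0_def using a b by linarith
qed

lemma Dr_eq: "1 \<le> t \<Longrightarrow> Dr t \<omega> = h0 t (W t \<omega>, Z t \<omega>)"
  by (simp add: Dr_def h0_def F_W)

lemma WZ_meas: "1 \<le> t \<Longrightarrow> (\<lambda>\<omega>. (W t \<omega>, Z t \<omega>)) \<in> measurable P (SS t \<Otimes>\<^sub>M rho)"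
  using W_meas Z_meas by (intro measurable_Pair) auto

lemma Dr_meas: "1 \<le> t \<Longrightarrow> Dr t \<in> borel_measurable P"
proof -
  assume t: "1 \<le> t"
  have "(\<lambda>\<omega>. h0 t (W t \<omega>, Z t \<omega>)) \<in> borel_measurable P" using measurable_compose[OF WZ_meas[OF t] h0_meas] .
  moreover have "Dr t = (\<lambda>\<omega>. h0 t (W t \<omega>, Z t \<omega>))" using Dr_eq[OF t] by (simp add: fun_eq_iff)
  ultimately show ?thesis by simp
qed

lemma Dr_bound: "1 \<le> t \<Longrightarrow> \<omega> \<in> space P \<Longrightarrow> \<bar>Dr t \<omega>\<bar> \<le> LB (bnd t) + LB (norm fH)"
  using Dr_eq h0_bound measurable_space[OF WZ_meas] by metis

lemma ar_meas: "ar t \<in> borel_measurable P" using adapted_meas[OF ar_adapted] .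

lemma ar_bound: "\<omega> \<in> space P \<Longrightarrow> \<bar>ar t \<omega>\<bar> \<le> LB (bnd t) + LB (norm fH)"
proof -
  assume w: "\<omega> \<in> space P"
  have "ge (F (zs \<omega>) t) \<le> LB (bnd t)" by (rule ge_bound[OF F_bnd[OF w]])
  moreover have "ge fH \<le> LB (norm fH)" by (rule ge_bound) simp
  ultimately show ?thesis using ge_nonneg[of fH] ge_nonneg[of "F (zs \<omega>) t"] unfolding ar_def by linarith
qed

lemma Dr_expect:
  assumes t: "1 \<le> t" and G: "adapted t G" and G01: "\<And>\<omega>. \<omega> \<in> space P \<Longrightarrow> 0 \<le> G \<omega> \<and> G \<omega> \<le> 1"
  shows "(\<integral>\<omega>. G \<omega> * Dr t \<omega> \<partial>P) = (\<integral>\<omega>. G \<omega> * ar t \<omega> \<partial>P)"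
proof -
  interpret rho: prob_space rho by (rule rho_prob)
  obtain g where g: "g \<in> borel_measurable (SS t)" and eq: "\<forall>\<omega>\<in>space P. G \<omega> = g (W t \<omega>)"
    using G by (auto simp: adapted_def)
  define g' where "g' w = max 0 (min 1 (g w))" for w
  have g'm: "g' \<in> borel_measurable (SS t)" unfolding g'_def[abs_def] using g by measurable
  have eq': "\<And>\<omega>. \<omega> \<in> space P \<Longrightarrow> G \<omega> = g' (W t \<omega>)"
    using eq G01 unfolding g'_def by (metis max_absorb2 min_absorb2)
  define h where "h p = g' (fst p) * h0 t p" for p
  have hm: "h \<in> borel_measurable (SS t \<Otimes>\<^sub>M rho)"
    unfolding h_def[abs_def] using measurable_compose[OF measurable_fst g'm] h0_meas by (intro borel_measurable_times) auto
  have hb: "\<And>p. p \<in> space (SS t \<Otimes>\<^sub>M rho) \<Longrightarrow> \<bar>h p\<bar> \<le> LB (bnd t) + LB (norm fH)"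
  proof -
    fix p assume p: "p \<in> space (SS t \<Otimes>\<^sub>M rho)"
    have "\<bar>g' (fst p)\<bar> \<le> 1" by (simp add: g'_def)
    then have "\<bar>h p\<bar> \<le> 1 * \<bar>h0 t p\<bar>" unfolding h_def abs_mult by (intro mult_right_mono) auto
    then show "\<bar>h p\<bar> \<le> LB (bnd t) + LB (norm fH)" using h0_bound[OF p] by simp
  qed
  have "(\<integral>\<omega>. G \<omega> * Dr t \<omega> \<partial>P) = (\<integral>\<omega>. h (W t \<omega>, Z t \<omega>) \<partial>P)"
    by (intro Bochner_Integration.integral_cong refl) (simp add: h_def eq' Dr_eq[OF t])
  also have "\<dots> = (\<integral>\<omega>. (\<integral>z. h (W t \<omega>, z) \<partial>rho) \<partial>P)" by (rule indep_integral[OF t hm hb])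
  also have "\<dots> = (\<integral>\<omega>. G \<omega> * ar t \<omega> \<partial>P)"
  proof (intro Bochner_Integration.integral_cong refl)
    fix \<omega> assume w: "\<omega> \<in> space P"
    have "(\<integral>z. h (W t \<omega>, z) \<partial>rho) = g' (W t \<omega>) * (\<integral>z. loss (F (W t \<omega>) t) z - loss fH z \<partial>rho)"
      by (simp add: h_def h0_def)
    also have "\<dots> = G \<omega> * ar t \<omega>"
      using loss_integrable eq'[OF w] by (simp add: ar_def ge_F_eq F_W ge_def gen_err_loss)
    finally show "(\<integral>z. h (W t \<omega>, z) \<partial>rho) = G \<omega> * ar t \<omega>" .
  qed
  finally show ?thesis .
qed

lemma Vr_step:
  assumes t: "1 \<le> t" and w: "\<omega> \<in> space P"
  shows "Vr (Suc t) \<omega> \<le> Vr t \<omega> - beta t * Dr t \<omega> + (eta t)\<^sup>2 * MM"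
proof -
  obtain x y where xy: "Z t \<omega> = (x, y)" by fastforce
  have xY: "x \<in> X" "y \<in> Y" using Z_space[OF t w] xy by auto
  have "zs \<omega> t = (x, y)" using xy by (simp add: zs_def)
  from V_step[of t "zs \<omega>" x y, OF t this xY] show ?thesis
    by (simp add: Vr_def Dr_def loss_def xy)
qed

lemma SM_ineq:
  assumes t: "1 \<le> t" and G: "adapted t G" and G01: "\<And>\<omega>. \<omega> \<in> space P \<Longrightarrow> 0 \<le> G \<omega> \<and> G \<omega> \<le> 1"
  shows "(\<integral>\<omega>. G \<omega> * Vr (Suc t) \<omega> \<partial>P) \<le> (\<integral>\<omega>. G \<omega> * Vr t \<omega> \<partial>P)
     - beta t * (\<integral>\<omega>. G \<omega> * ar t \<omega> \<partial>P) + (eta t)\<^sup>2 * MM * (\<integral>\<omega>. G \<omega> \<partial>P)"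
proof -
  have Gm: "G \<in> borel_measurable P" by (rule adapted_meas[OF G])
  have iG: "integrable P G" using Gm G01 by (intro bdd_int[where B=1]) auto
  have iV: "integrable P (\<lambda>\<omega>. G \<omega> * Vr t' \<omega>)" for t'
  proof (rule bdd_int[where B="(bnd t' + norm fH)\<^sup>2"])
    show "(\<lambda>\<omega>. G \<omega> * Vr t' \<omega>) \<in> borel_measurable P" using Gm Vr_meas by (intro borel_measurable_times)
    fix \<omega> assume w: "\<omega> \<in> space P"
    have "\<bar>G \<omega> * Vr t' \<omega>\<bar> \<le> 1 * \<bar>Vr t' \<omega>\<bar>" unfolding abs_mult using G01[OF w] by (intro mult_right_mono) auto
    then show "\<bar>G \<omega> * Vr t' \<omega>\<bar> \<le> (bnd t' + norm fH)\<^sup>2" using Vr_bound[OF w, of t'] by simp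
  qed
  have iD: "integrable P (\<lambda>\<omega>. G \<omega> * Dr t \<omega>)"
  proof (rule bdd_int[where B="LB (bnd t) + LB (norm fH)"])
    show "(\<lambda>\<omega>. G \<omega> * Dr t \<omega>) \<in> borel_measurable P" using Gm Dr_meas[OF t] by (intro borel_measurable_times)
    fix \<omega> assume w: "\<omega> \<in> space P"
    have "\<bar>G \<omega> * Dr t \<omega>\<bar> \<le> 1 * \<bar>Dr t \<omega>\<bar>" unfolding abs_mult using G01[OF w] by (intro mult_right_mono) auto
    then show "\<bar>G \<omega> * Dr t \<omega>\<bar> \<le> LB (bnd t) + LB (norm fH)" using Dr_bound[OF t w] by simp
  qed
  have "(\<integral>\<omega>. G \<omega> * Vr (Suc t) \<omega> \<partial>P) \<le> (\<integral>\<omega>. G \<omega> * Vr t \<omega> - beta t * (G \<omega> * Dr t \<omega>) + (eta t)\<^sup>2 * MM * G \<omega> \<partial>P)"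
  proof (rule integral_mono)
    show "integrable P (\<lambda>\<omega>. G \<omega> * Vr (Suc t) \<omega>)" by (rule iV)
    show "integrable P (\<lambda>\<omega>. G \<omega> * Vr t \<omega> - beta t * (G \<omega> * Dr t \<omega>) + (eta t)\<^sup>2 * MM * G \<omega>)"
      using iV iD iG by auto
    fix \<omega> assume w: "\<omega> \<in> space P"
    have "G \<omega> * Vr (Suc t) \<omega> \<le> G \<omega> * (Vr t \<omega> - beta t * Dr t \<omega> + (eta t)\<^sup>2 * MM)"
      using Vr_step[OF t w] G01[OF w] by (intro mult_left_mono) auto
    then show "G \<omega> * Vr (Suc t) \<omega> \<le> G \<omega> * Vr t \<omega> - beta t * (G \<omega> * Dr t \<omega>) + (eta t)\<^sup>2 * MM * G \<omega>"
      by (simp add: algebra_simps)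
  qed
  also have "\<dots> = (\<integral>\<omega>. G \<omega> * Vr t \<omega> \<partial>P) - beta t * (\<integral>\<omega>. G \<omega> * Dr t \<omega> \<partial>P) + (eta t)\<^sup>2 * MM * (\<integral>\<omega>. G \<omega> \<partial>P)"
    using iV iD iG by simp
  also have "(\<integral>\<omega>. G \<omega> * Dr t \<omega> \<partial>P) = (\<integral>\<omega>. G \<omega> * ar t \<omega> \<partial>P)" by (rule Dr_expect[OF t G G01])
  finally show ?thesis .
qed

end


context ogd_set
begin

lemma eta_powr_summable: "summable (\<lambda>t. eta t powr (1 + alpha))"
  using eta_sum summable_Suc_iff[of "\<lambda>t. eta t powr (1 + alpha)"] by simp

lemma eta_not_summable: "\<not> summable eta"
  using eta_div summable_Suc_iff[of eta] by simp

lemma eta_tend: "eta \<longlonglongrightarrow> 0"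
proof (rule LIMSEQ_I)
  fix r :: real assume r: "0 < r"
  have "(\<lambda>t. eta t powr (1 + alpha)) \<longlonglongrightarrow> 0" by (rule summable_LIMSEQ_zero[OF eta_powr_summable])
  moreover have "0 < r powr (1 + alpha)" using r by simp
  ultimately obtain N where N: "\<And>n. n \<ge> N \<Longrightarrow> norm (eta n powr (1 + alpha) - 0) < r powr (1 + alpha)"
    using LIMSEQ_D by blast
  show "\<exists>no. \<forall>n\<ge>no. norm (eta n - 0) < r"
  proof (intro exI[of _ "max N 1"] allI impI)
    fix n assume n: "max N 1 \<le> n"
    have e: "0 < eta n" using eta_pos n by auto
    have "eta n powr (1 + alpha) < r powr (1 + alpha)" using N[of n] n e by auto
    then have "eta n < r"
    proof (rule contrapos_pp)
      assume "\<not> eta n < r"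
      then have "r \<le> eta n" by simp
      then show "\<not> eta n powr (1 + alpha) < r powr (1 + alpha)" using r alpha
        by (simp add: not_less powr_mono2)
    qed
    then show "norm (eta n - 0) < r" using e by simp
  qed
qed

lemma eventually_eta_small: "c > 0 \<Longrightarrow> \<exists>N. \<forall>t\<ge>N. eta t \<le> c"
proof -
  assume c: "c > 0"
  obtain N where "\<forall>n\<ge>N. norm (eta n - 0) < c" using LIMSEQ_D[OF eta_tend c] by blast
  then show ?thesis by (intro exI[of _ N]) auto
qed

lemma eta2_summable: "summable (\<lambda>t. (eta t)\<^sup>2)"
proof -
  obtain N where N: "\<And>t. t \<ge> N \<Longrightarrow> eta t \<le> 1" using eventually_eta_small[of 1] by auto
  show ?thesis
  proof (rule summable_comparison_test[OF _ eta_powr_summable])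
    show "\<exists>N'. \<forall>n\<ge>N'. norm ((eta n)\<^sup>2) \<le> eta n powr (1 + alpha)"
    proof (intro exI[of _ "max N 1"] allI impI)
      fix n assume n: "max N 1 \<le> n"
      have e: "0 < eta n" "eta n \<le> 1" using eta_pos n N[of n] by auto
      have "eta n powr 2 \<le> eta n powr (1 + alpha)" using e alpha by (intro powr_mono') auto
      then show "norm ((eta n)\<^sup>2) \<le> eta n powr (1 + alpha)" using e by (simp add: powr_power)
    qed
  qed
qed

definition "T0 = (SOME T. 1 \<le> T \<and> (\<forall>t\<ge>T. kap\<^sup>2 * cself * eta t \<le> 1))"

lemma T0: "1 \<le> T0" "t \<ge> T0 \<Longrightarrow> kap\<^sup>2 * cself * eta t \<le> 1"
proof -
  have "\<exists>T. 1 \<le> T \<and> (\<forall>t\<ge>T. kap\<^sup>2 * cself * eta t \<le> 1)"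
  proof -
    have c: "kap\<^sup>2 * cself + 1 > 0" using cself_pos by (simp add: add_nonneg_pos)
    obtain N where N: "\<And>t. t \<ge> N \<Longrightarrow> eta t \<le> 1 / (kap\<^sup>2 * cself + 1)"
      using eventually_eta_small[of "1 / (kap\<^sup>2 * cself + 1)"] c by auto
    show ?thesis
    proof (intro exI[of _ "max N 1"] conjI allI impI)
      fix t assume t: "max N 1 \<le> t"
      have e: "0 \<le> eta t" using eta_pos t by (auto intro: less_imp_le)
      have "kap\<^sup>2 * cself * eta t \<le> (kap\<^sup>2 * cself + 1) * eta t" using e by (simp add: mult_right_mono)
      also have "\<dots> \<le> (kap\<^sup>2 * cself + 1) * (1 / (kap\<^sup>2 * cself + 1))"
        using N[of t] t c by (intro mult_left_mono) auto
      finally show "kap\<^sup>2 * cself * eta t \<le> 1" using c by simp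
    qed auto
  qed
  from someI_ex[OF this] show "1 \<le> T0" "t \<ge> T0 \<Longrightarrow> kap\<^sup>2 * cself * eta t \<le> 1" unfolding T0_def by auto
qed

lemma beta_ge: "t \<ge> T0 \<Longrightarrow> eta t \<le> beta t"
proof -
  assume t: "t \<ge> T0"
  have e: "0 \<le> eta t" using eta_pos t T0(1) by (auto intro: less_imp_le)
  have "kap\<^sup>2 * cself * (eta t)\<^sup>2 = (kap\<^sup>2 * cself * eta t) * eta t" by (simp add: power2_eq_square)
  also have "\<dots> \<le> 1 * eta t" using T0(2)[OF t] e by (intro mult_right_mono) auto
  finally show ?thesis by (simp add: beta_def)
qed

definition "Rt t = (\<Sum>j. (eta (j + t))\<^sup>2)"

lemma Rt_step: "Rt t = (eta t)\<^sup>2 + Rt (Suc t)"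
proof -
  have s: "summable (\<lambda>j. (eta (j + t))\<^sup>2)" using eta2_summable summable_iff_shift[of "\<lambda>j. (eta j)\<^sup>2" t] by simp
  show ?thesis unfolding Rt_def using suminf_split_head[OF s] by simp
qed

lemma Rt_nonneg: "0 \<le> Rt t"
  unfolding Rt_def using eta2_summable summable_iff_shift[of "\<lambda>j. (eta j)\<^sup>2" t] by (intro suminf_nonneg) auto

lemma MM_nonneg: "0 \<le> MM" using cself_pos BH(2) by (simp add: MM_def)

definition "U t \<omega> = Vr t \<omega> + MM * Rt t"

lemma U_meas: "U t \<in> borel_measurable P" unfolding U_def[abs_def] using Vr_meas by simp

lemma U_nonneg: "\<omega> \<in> space P \<Longrightarrow> 0 \<le> U t \<omega>"
  using Vr_bound[of \<omega> t] MM_nonneg Rt_nonneg[of t] by (simp add: U_def)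

lemma U_adapted: "adapted t (U t)"
proof -
  have "adapted t (\<lambda>\<omega>. Vr t \<omega> + MM * Rt t)"
    using adapted_comp[OF Vr_adapted, of "\<lambda>x. x + MM * Rt t"] by simp
  then show ?thesis by (simp add: U_def[abs_def])
qed

lemma G_int_mult:
  assumes G: "adapted s G" and G01: "\<And>\<omega>. \<omega> \<in> space P \<Longrightarrow> 0 \<le> G \<omega> \<and> G \<omega> \<le> 1"
  shows "integrable P (\<lambda>\<omega>. G \<omega> * U t \<omega>)" "integrable P (\<lambda>\<omega>. G \<omega> * ar t \<omega>)" "integrable P G"
proof -
  have Gm: "G \<in> borel_measurable P" by (rule adapted_meas[OF G])
  show "integrable P G" using Gm G01 by (intro bdd_int[where B=1]) auto
  show "integrable P (\<lambda>\<omega>. G \<omega> * U t \<omega>)"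
  proof (rule bdd_int[where B="(bnd t + norm fH)\<^sup>2 + MM * Rt t"])
    show "(\<lambda>\<omega>. G \<omega> * U t \<omega>) \<in> borel_measurable P" using Gm U_meas by (intro borel_measurable_times)
    fix \<omega> assume w: "\<omega> \<in> space P"
    have "\<bar>G \<omega> * U t \<omega>\<bar> \<le> 1 * \<bar>U t \<omega>\<bar>" unfolding abs_mult using G01[OF w] by (intro mult_right_mono) auto
    then show "\<bar>G \<omega> * U t \<omega>\<bar> \<le> (bnd t + norm fH)\<^sup>2 + MM * Rt t"
      using Vr_bound[OF w, of t] U_nonneg[OF w, of t] by (simp add: U_def)
  qed
  show "integrable P (\<lambda>\<omega>. G \<omega> * ar t \<omega>)"
  proof (rule bdd_int[where B="LB (bnd t) + LB (norm fH)"])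
    show "(\<lambda>\<omega>. G \<omega> * ar t \<omega>) \<in> borel_measurable P" using Gm ar_meas by (intro borel_measurable_times)
    fix \<omega> assume w: "\<omega> \<in> space P"
    have "\<bar>G \<omega> * ar t \<omega>\<bar> \<le> 1 * \<bar>ar t \<omega>\<bar>" unfolding abs_mult using G01[OF w] by (intro mult_right_mono) auto
    then show "\<bar>G \<omega> * ar t \<omega>\<bar> \<le> LB (bnd t) + LB (norm fH)" using ar_bound[OF w, of t] by simp
  qed
qed

lemma U_step:
  assumes t: "T0 \<le> t" and G: "adapted t G" and G01: "\<And>\<omega>. \<omega> \<in> space P \<Longrightarrow> 0 \<le> G \<omega> \<and> G \<omega> \<le> 1"
  shows "(\<integral>\<omega>. G \<omega> * U (Suc t) \<omega> \<partial>P) \<le> (\<integral>\<omega>. G \<omega> * U t \<omega> \<partial>P) - eta t * (\<integral>\<omega>. G \<omega> * ar t \<omega> \<partial>P)"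
proof -
  have t1: "1 \<le> t" using t T0(1) by simp
  note ints = G_int_mult[OF G G01]
  have iV: "integrable P (\<lambda>\<omega>. G \<omega> * Vr t' \<omega>)" for t'
  proof -
    have "integrable P (\<lambda>\<omega>. G \<omega> * U t' \<omega> - MM * Rt t' * G \<omega>)" using ints by auto
    then show ?thesis by (simp add: U_def algebra_simps)
  qed
  have eqU: "(\<integral>\<omega>. G \<omega> * U t' \<omega> \<partial>P) = (\<integral>\<omega>. G \<omega> * Vr t' \<omega> \<partial>P) + MM * Rt t' * (\<integral>\<omega>. G \<omega> \<partial>P)" for t'
  proof -
    have "(\<integral>\<omega>. G \<omega> * U t' \<omega> \<partial>P) = (\<integral>\<omega>. G \<omega> * Vr t' \<omega> + MM * Rt t' * G \<omega> \<partial>P)"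
      by (simp add: U_def algebra_simps)
    also have "\<dots> = (\<integral>\<omega>. G \<omega> * Vr t' \<omega> \<partial>P) + MM * Rt t' * (\<integral>\<omega>. G \<omega> \<partial>P)"
      using iV ints by simp
    finally show ?thesis .
  qed
  have Ga: "0 \<le> (\<integral>\<omega>. G \<omega> * ar t \<omega> \<partial>P)"
    using G01 ar_nonneg by (intro integral_nonneg_AE AE_I2) auto
  have b: "eta t * (\<integral>\<omega>. G \<omega> * ar t \<omega> \<partial>P) \<le> beta t * (\<integral>\<omega>. G \<omega> * ar t \<omega> \<partial>P)"
    using beta_ge[OF t] Ga by (intro mult_right_mono) auto
  show ?thesis using SM_ineq[OF t1 G G01] eqU[of t] eqU[of "Suc t"] Rt_step[of t] b
    by (simp add: algebra_simps)
qed

end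


context ogd_set
begin

lemma one_G: "\<And>\<omega>. \<omega> \<in> space P \<Longrightarrow> 0 \<le> (1::real) \<and> (1::real) \<le> 1" by simp

lemma EU_step: "T0 \<le> t \<Longrightarrow> (\<integral>\<omega>. U (Suc t) \<omega> \<partial>P) \<le> (\<integral>\<omega>. U t \<omega> \<partial>P) - eta t * (\<integral>\<omega>. ar t \<omega> \<partial>P)"
  using U_step[of t "\<lambda>_. 1", OF _ adapted_const] by simp

lemma EU_nonneg: "0 \<le> (\<integral>\<omega>. U t \<omega> \<partial>P)"
  using U_nonneg by (intro integral_nonneg_AE AE_I2) auto

lemma Ear_nonneg: "0 \<le> (\<integral>\<omega>. ar t \<omega> \<partial>P)"
  using ar_nonneg by (intro integral_nonneg_AE AE_I2) auto

lemma eta_T0: "0 \<le> eta (n + T0)"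
  using eta_pos T0(1) by (auto intro: less_imp_le)

lemma Esum_bound: "(\<Sum>i<n. eta (i + T0) * (\<integral>\<omega>. ar (i + T0) \<omega> \<partial>P)) \<le> (\<integral>\<omega>. U T0 \<omega> \<partial>P) - (\<integral>\<omega>. U (n + T0) \<omega> \<partial>P)"
proof (induction n)
  case 0 then show ?case by simp
next
  case (Suc n)
  have "(\<integral>\<omega>. U (Suc (n + T0)) \<omega> \<partial>P) \<le> (\<integral>\<omega>. U (n + T0) \<omega> \<partial>P) - eta (n + T0) * (\<integral>\<omega>. ar (n + T0) \<omega> \<partial>P)"
    by (rule EU_step) simp
  then show ?case using Suc by simp
qed

lemma Esum_summable: "summable (\<lambda>i. eta (i + T0) * (\<integral>\<omega>. ar (i + T0) \<omega> \<partial>P))"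
proof (rule summableI_nonneg_bounded)
  show "\<And>n. 0 \<le> eta (n + T0) * (\<integral>\<omega>. ar (n + T0) \<omega> \<partial>P)"
    using eta_T0 Ear_nonneg by (intro mult_nonneg_nonneg)
  show "\<And>n. (\<Sum>i<n. eta (i + T0) * (\<integral>\<omega>. ar (i + T0) \<omega> \<partial>P)) \<le> (\<integral>\<omega>. U T0 \<omega> \<partial>P)"
    using Esum_bound EU_nonneg by (smt (z3))
qed

lemma AE_summable: "AE \<omega> in P. summable (\<lambda>i. eta (i + T0) * ar (i + T0) \<omega>)"
proof -
  interpret P: prob_space P by (rule P_prob)
  let ?f = "\<lambda>i \<omega>. ennreal (eta (i + T0) * ar (i + T0) \<omega>)"
  have fm: "\<And>i. ?f i \<in> borel_measurable P" using ar_meas by measurable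
  have int: "\<And>i. integrable P (\<lambda>\<omega>. eta (i + T0) * ar (i + T0) \<omega>)"
    using G_int_mult(2)[OF adapted_const one_G] by simp
  have "(\<integral>\<^sup>+\<omega>. (\<Sum>i. ?f i \<omega>) \<partial>P) = (\<Sum>i. \<integral>\<^sup>+\<omega>. ?f i \<omega> \<partial>P)" by (rule nn_integral_suminf[OF fm])
  also have "\<dots> = (\<Sum>i. ennreal (eta (i + T0) * (\<integral>\<omega>. ar (i + T0) \<omega> \<partial>P)))"
  proof (intro suminf_cong)
    fix i
    have "(\<integral>\<^sup>+\<omega>. ?f i \<omega> \<partial>P) = ennreal (\<integral>\<omega>. eta (i + T0) * ar (i + T0) \<omega> \<partial>P)"
      using int[of i] eta_T0[of i] ar_nonneg by (intro nn_integral_eq_integral AE_I2) auto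
    then show "(\<integral>\<^sup>+\<omega>. ?f i \<omega> \<partial>P) = ennreal (eta (i + T0) * (\<integral>\<omega>. ar (i + T0) \<omega> \<partial>P))" by simp
  qed
  also have "\<dots> = ennreal (\<Sum>i. eta (i + T0) * (\<integral>\<omega>. ar (i + T0) \<omega> \<partial>P))"
    using Esum_summable eta_T0 Ear_nonneg by (intro suminf_ennreal2 mult_nonneg_nonneg) auto
  finally have "(\<integral>\<^sup>+\<omega>. (\<Sum>i. ?f i \<omega>) \<partial>P) \<noteq> \<infinity>" by simp
  then have "AE \<omega> in P. (\<Sum>i. ?f i \<omega>) \<noteq> \<infinity>" by (intro nn_integral_PInf_AE) (use fm in auto)
  then show ?thesis
  proof (rule AE_mp, intro AE_I2 impI)
    fix \<omega> assume "(\<Sum>i. ?f i \<omega>) \<noteq> \<infinity>"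
    then show "summable (\<lambda>i. eta (i + T0) * ar (i + T0) \<omega>)"
      using eta_T0 ar_nonneg by (intro summable_suminf_not_top mult_nonneg_nonneg) auto
  qed
qed

end


context ogd_set
begin

lemma adapted_prod: "finite I \<Longrightarrow> (\<And>i. i \<in> I \<Longrightarrow> adapted t (G i)) \<Longrightarrow> adapted t (\<lambda>\<omega>. \<Prod>i\<in>I. G i \<omega>)"
proof (induction I rule: finite_induct)
  case empty then show ?case using adapted_const by simp
next
  case (insert x F) then show ?case using adapted_mult[of t "G x" "\<lambda>\<omega>. \<Prod>i\<in>F. G i \<omega>"] by simp
qed

lemma U_iter:
  assumes t: "T0 \<le> t" and G: "adapted t G" and G01: "\<And>\<omega>. \<omega> \<in> space P \<Longrightarrow> 0 \<le> G \<omega> \<and> G \<omega> \<le> 1"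
  shows "(\<integral>\<omega>. G \<omega> * U (t + k) \<omega> \<partial>P) \<le> (\<integral>\<omega>. G \<omega> * U t \<omega> \<partial>P)"
proof (induction k)
  case 0 then show ?case by simp
next
  case (Suc k)
  have G': "adapted (t + k) G" using adapted_mono[OF G] by simp
  have "0 \<le> (\<integral>\<omega>. G \<omega> * ar (t + k) \<omega> \<partial>P)" using G01 ar_nonneg by (intro integral_nonneg_AE AE_I2) auto
  moreover have "0 \<le> eta (t + k)" using eta_pos t T0(1) by (auto intro: less_imp_le)
  ultimately have "0 \<le> eta (t + k) * (\<integral>\<omega>. G \<omega> * ar (t + k) \<omega> \<partial>P)" by simp
  then show ?case using U_step[of "t + k" G, OF _ G' G01] t Suc by simp
qed

definition "ind b = (if b then (1::real) else 0)"

definition "Ht lam t \<omega> = ind (lam \<le> U t \<omega>) * (\<Prod>s\<in>{T0..<t}. ind (U s \<omega> < lam))"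

lemma Ht_eq: "Ht lam t \<omega> = ind (lam \<le> U t \<omega> \<and> (\<forall>s\<in>{T0..<t}. U s \<omega> < lam))"
proof (cases "\<forall>s\<in>{T0..<t}. U s \<omega> < lam")
  case True
  then have "(\<Prod>s\<in>{T0..<t}. ind (U s \<omega> < lam)) = 1" by (intro prod.neutral) (simp add: ind_def)
  then show ?thesis using True by (simp add: Ht_def ind_def)
next
  case False
  then obtain s where s: "s \<in> {T0..<t}" "\<not> U s \<omega> < lam" by auto
  then have "(\<Prod>s\<in>{T0..<t}. ind (U s \<omega> < lam)) = 0" by (intro prod_zero) (auto simp: ind_def)
  then show ?thesis using False by (simp add: Ht_def ind_def)
qed

lemma ind_meas: "(\<lambda>x::real. ind (c \<le> x)) \<in> borel_measurable borel" "(\<lambda>x::real. ind (x < c)) \<in> borel_measurable borel"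
  unfolding ind_def by measurable

lemma Ht_adapted: "adapted t (Ht lam t)"
proof -
  have "adapted t (\<lambda>\<omega>. ind (lam \<le> U t \<omega>))" by (rule adapted_comp[OF U_adapted ind_meas(1)])
  moreover have "adapted t (\<lambda>\<omega>. \<Prod>s\<in>{T0..<t}. ind (U s \<omega> < lam))"
  proof (rule adapted_prod)
    fix s assume "s \<in> {T0..<t}"
    then have "adapted t (U s)" using adapted_mono[OF U_adapted, of s t] by simp
    then show "adapted t (\<lambda>\<omega>. ind (U s \<omega> < lam))" by (rule adapted_comp[OF _ ind_meas(2)])
  qed simp
  ultimately show ?thesis unfolding Ht_def[abs_def] by (rule adapted_mult)
qed

lemma Ht_01: "0 \<le> Ht lam t \<omega> \<and> Ht lam t \<omega> \<le> 1" unfolding Ht_eq by (simp add: ind_def)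

lemma Ht_sum: "(\<Sum>t\<in>{T0..T0 + k}. Ht lam t \<omega>) = ind (\<exists>t\<in>{T0..T0 + k}. lam \<le> U t \<omega>)"
proof (induction k)
  case 0 then show ?case by (simp add: Ht_eq)
next
  case (Suc k)
  have split: "{T0..T0 + Suc k} = insert (T0 + Suc k) {T0..T0 + k}" by auto
  have "(\<Sum>t\<in>{T0..T0 + Suc k}. Ht lam t \<omega>) = Ht lam (T0 + Suc k) \<omega> + ind (\<exists>t\<in>{T0..T0 + k}. lam \<le> U t \<omega>)"
    unfolding split using Suc by simp
  also have "\<dots> = ind (\<exists>t\<in>{T0..T0 + Suc k}. lam \<le> U t \<omega>)"
  proof (cases "\<exists>t\<in>{T0..T0 + k}. lam \<le> U t \<omega>")
    case True
    then have "Ht lam (T0 + Suc k) \<omega> = 0" unfolding Ht_eq ind_def by (auto simp: not_less)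
    then show ?thesis using True by (auto simp: ind_def)
  next
    case False
    then have "(\<forall>s\<in>{T0..<T0 + Suc k}. U s \<omega> < lam)" by (auto simp: not_le)
    then have "Ht lam (T0 + Suc k) \<omega> = ind (lam \<le> U (T0 + Suc k) \<omega>)" unfolding Ht_eq by simp
    moreover have "(\<exists>t\<in>{T0..T0 + Suc k}. lam \<le> U t \<omega>) \<longleftrightarrow> lam \<le> U (T0 + Suc k) \<omega>"
      using False split by auto
    ultimately show ?thesis using False by (simp add: ind_def)
  qed
  finally show ?case .
qed

lemma Ht_lam: "lam * Ht lam t \<omega> \<le> Ht lam t \<omega> * U t \<omega>"
  unfolding Ht_eq ind_def by auto

definition "Hit lam k = {\<omega>\<in>space P. \<exists>t\<in>{T0..T0 + k}. lam \<le> U t \<omega>}"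

lemma Hit_sets: "Hit lam k \<in> sets P"
  unfolding Hit_def using U_meas by measurable

definition "Qk lam k \<omega> = (\<Prod>s\<in>{T0..T0 + k}. ind (U s \<omega> < lam))"

lemma Qk_eq: "Qk lam k \<omega> = 1 - ind (\<exists>t\<in>{T0..T0 + k}. lam \<le> U t \<omega>)"
proof (cases "\<forall>s\<in>{T0..T0 + k}. U s \<omega> < lam")
  case True
  then have "Qk lam k \<omega> = 1" unfolding Qk_def by (intro prod.neutral) (simp add: ind_def)
  then show ?thesis using True by (auto simp: ind_def not_le)
next
  case False
  then obtain s where s: "s \<in> {T0..T0 + k}" "\<not> U s \<omega> < lam" by auto
  then have "Qk lam k \<omega> = 0" unfolding Qk_def by (intro prod_zero) (auto simp: ind_def)
  then show ?thesis using s by (auto simp: ind_def not_less)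
qed

lemma Qk_adapted: "adapted (T0 + k) (Qk lam k)"
  unfolding Qk_def[abs_def]
proof (rule adapted_prod)
  fix s assume "s \<in> {T0..T0 + k}"
  then have "adapted (T0 + k) (U s)" using adapted_mono[OF U_adapted, of s "T0 + k"] by simp
  then show "adapted (T0 + k) (\<lambda>\<omega>. ind (U s \<omega> < lam))" by (rule adapted_comp[OF _ ind_meas(2)])
qed simp

lemma Qk_01: "0 \<le> Qk lam k \<omega> \<and> Qk lam k \<omega> \<le> 1" unfolding Qk_eq by (simp add: ind_def)

definition "Yk lam k \<omega> = (\<Sum>t\<in>{T0..T0 + k}. Ht lam t \<omega> * U t \<omega>) + Qk lam k \<omega> * U (T0 + k) \<omega>"

lemma Yk_Suc: "Yk lam (Suc k) \<omega> = Yk lam k \<omega> + Qk lam k \<omega> * (U (T0 + Suc k) \<omega> - U (T0 + k) \<omega>)"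
proof -
  have split: "{T0..T0 + Suc k} = insert (T0 + Suc k) {T0..T0 + k}" by auto
  have I: "ind (\<exists>t\<in>{T0..T0 + Suc k}. lam \<le> U t \<omega>) = ind (\<exists>t\<in>{T0..T0 + k}. lam \<le> U t \<omega>) + Ht lam (T0 + Suc k) \<omega>"
    using Ht_sum[where k="Suc k" and lam=lam and \<omega>=\<omega>] Ht_sum[where k=k and lam=lam and \<omega>=\<omega>] unfolding split by simp
  show ?thesis unfolding Yk_def split using I by (simp add: Qk_eq algebra_simps)
qed

lemma Yk_0: "Yk lam 0 \<omega> = U T0 \<omega>"
  unfolding Yk_def Qk_eq using Ht_sum[where k=0 and lam=lam and \<omega>=\<omega>] by (simp add: algebra_simps)

lemma ville:
  assumes lam: "0 < lam"
  shows "measure P (Hit lam k) \<le> (\<integral>\<omega>. U T0 \<omega> \<partial>P) / lam"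
proof -
  interpret P: prob_space P by (rule P_prob)
  let ?I = "\<lambda>\<omega>. ind (\<exists>t\<in>{T0..T0 + k}. lam \<le> U t \<omega>)"
  have iH: "\<And>t s. integrable P (\<lambda>\<omega>. Ht lam t \<omega> * U s \<omega>)"
    using G_int_mult(1)[OF Ht_adapted] Ht_01 by blast
  have iQ: "\<And>k s. integrable P (\<lambda>\<omega>. Qk lam k \<omega> * U s \<omega>)"
    using G_int_mult(1)[OF Qk_adapted] Qk_01 by blast
  have iY: "\<And>k. integrable P (Yk lam k)" unfolding Yk_def[abs_def] using iH iQ by auto
  have "lam * measure P (Hit lam k) = (\<integral>\<omega>. lam * ?I \<omega> \<partial>P)"
  proof -
    have "(\<integral>\<omega>. lam * ?I \<omega> \<partial>P) = (\<integral>\<omega>. lam * indicator (Hit lam k) \<omega> \<partial>P)"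
      by (intro Bochner_Integration.integral_cong refl) (auto simp: ind_def Hit_def indicator_def)
    also have "\<dots> = lam * integral\<^sup>L P (indicator (Hit lam k))" by (rule integral_mult_right_zero)
    finally have "(\<integral>\<omega>. lam * ?I \<omega> \<partial>P) = lam * integral\<^sup>L P (indicator (Hit lam k))" .
    moreover have "integral\<^sup>L P (indicator (Hit lam k)) = measure P (Hit lam k)"
    proof -
      have "Hit lam k \<inter> space P = Hit lam k" by (auto simp: Hit_def)
      then show ?thesis using Bochner_Integration.integral_indicator[of P "Hit lam k"] by (simp only:)
    qed
    ultimately show ?thesis by (simp only:)
  qed
  also have "\<dots> \<le> (\<integral>\<omega>. Yk lam k \<omega> \<partial>P)"
  proof (rule integral_mono)
    have "integrable P (\<lambda>\<omega>. lam * (\<Sum>t\<in>{T0..T0 + k}. Ht lam t \<omega>))"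
      using G_int_mult(3)[OF Ht_adapted] Ht_01 by auto
    then show "integrable P (\<lambda>\<omega>. lam * ?I \<omega>)" by (simp add: Ht_sum)
  next
    show "integrable P (Yk lam k)" by (rule iY)
    fix \<omega> assume w: "\<omega> \<in> space P"
    have "lam * ?I \<omega> = (\<Sum>t\<in>{T0..T0 + k}. lam * Ht lam t \<omega>)" by (simp add: Ht_sum[symmetric] sum_distrib_left)
    also have "\<dots> \<le> (\<Sum>t\<in>{T0..T0 + k}. Ht lam t \<omega> * U t \<omega>)" by (intro sum_mono Ht_lam)
    also have "\<dots> \<le> Yk lam k \<omega>" unfolding Yk_def using Qk_01[of lam k \<omega>] U_nonneg[OF w] by simp
    finally show "lam * ?I \<omega> \<le> Yk lam k \<omega>" .
  qed
  also have "(\<integral>\<omega>. Yk lam k \<omega> \<partial>P) \<le> (\<integral>\<omega>. Yk lam 0 \<omega> \<partial>P)"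
  proof (induction k)
    case (Suc k)
    have "(\<integral>\<omega>. Yk lam (Suc k) \<omega> \<partial>P) = (\<integral>\<omega>. Yk lam k \<omega> \<partial>P) + (\<integral>\<omega>. Qk lam k \<omega> * U (Suc (T0 + k)) \<omega> \<partial>P) - (\<integral>\<omega>. Qk lam k \<omega> * U (T0 + k) \<omega> \<partial>P)"
    proof -
      have "(\<integral>\<omega>. Yk lam (Suc k) \<omega> \<partial>P) = (\<integral>\<omega>. (Yk lam k \<omega> + Qk lam k \<omega> * U (Suc (T0 + k)) \<omega>) - Qk lam k \<omega> * U (T0 + k) \<omega> \<partial>P)"
        by (intro Bochner_Integration.integral_cong refl) (simp add: Yk_Suc algebra_simps)
      also have "\<dots> = (\<integral>\<omega>. Yk lam k \<omega> + Qk lam k \<omega> * U (Suc (T0 + k)) \<omega> \<partial>P) - (\<integral>\<omega>. Qk lam k \<omega> * U (T0 + k) \<omega> \<partial>P)"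
        by (rule Bochner_Integration.integral_diff) (use iY iQ in auto)
      also have "(\<integral>\<omega>. Yk lam k \<omega> + Qk lam k \<omega> * U (Suc (T0 + k)) \<omega> \<partial>P) = (\<integral>\<omega>. Yk lam k \<omega> \<partial>P) + (\<integral>\<omega>. Qk lam k \<omega> * U (Suc (T0 + k)) \<omega> \<partial>P)"
        by (rule Bochner_Integration.integral_add) (use iY iQ in auto)
      finally show ?thesis .
    qed
    also have "\<dots> \<le> (\<integral>\<omega>. Yk lam k \<omega> \<partial>P)"
    proof -
      have "0 \<le> (\<integral>\<omega>. Qk lam k \<omega> * ar (T0 + k) \<omega> \<partial>P)"
        using ar_nonneg Qk_01 by (intro integral_nonneg_AE AE_I2) auto
      moreover have "0 \<le> eta (T0 + k)" using eta_T0[of k] by (simp add: add.commute)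
      ultimately have "0 \<le> eta (T0 + k) * (\<integral>\<omega>. Qk lam k \<omega> * ar (T0 + k) \<omega> \<partial>P)" by simp
      then show ?thesis using U_step[of "T0 + k" "Qk lam k", OF _ Qk_adapted Qk_01] by simp
    qed
    finally show ?case using Suc by simp
  qed simp
  also have "\<dots> = (\<integral>\<omega>. U T0 \<omega> \<partial>P)" by (simp add: Yk_0)
  finally have "lam * measure P (Hit lam k) \<le> (\<integral>\<omega>. U T0 \<omega> \<partial>P)" .
  then show ?thesis using lam by (simp add: field_simps)
qed

end


context ogd_set
begin

lemma AE_bounded: "AE \<omega> in P. \<exists>M. \<forall>t\<ge>T0. U t \<omega> \<le> M"
proof -
  interpret P: prob_space P by (rule P_prob)
  define c where "c = (\<integral>\<omega>. U T0 \<omega> \<partial>P)"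
  define NN where "NN m = (\<Union>k. Hit (real (Suc m)) k)" for m
  define N where "N = (\<Inter>m. NN m)"
  have NNs: "NN m \<in> sets P" for m unfolding NN_def using Hit_sets by auto
  have Ns: "N \<in> sets P" unfolding N_def using NNs by auto
  have NNb: "measure P (NN m) \<le> c / real (Suc m)" for m
  proof -
    have inc: "incseq (Hit (real (Suc m)))"
      by (auto simp: incseq_def Hit_def)
    have "(\<lambda>k. measure P (Hit (real (Suc m)) k)) \<longlonglongrightarrow> measure P (\<Union>k. Hit (real (Suc m)) k)"
      using Hit_sets inc by (intro P.finite_Lim_measure_incseq) auto
    moreover have "\<forall>k\<ge>0. measure P (Hit (real (Suc m)) k) \<le> c / real (Suc m)"
      using ville[of "real (Suc m)"] by (simp add: c_def)
    ultimately show ?thesis unfolding NN_def by (intro LIMSEQ_le_const2) auto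
  qed
  have Nb: "measure P N \<le> c / real (Suc m)" for m
  proof -
    have "N \<subseteq> NN m" by (auto simp: N_def)
    then have "measure P N \<le> measure P (NN m)" using NNs Ns by (intro P.finite_measure_mono) auto
    then show ?thesis using NNb[of m] by simp
  qed
  have "(\<lambda>m. c / real (Suc m)) \<longlonglongrightarrow> 0" by (rule LIMSEQ_Suc[OF lim_const_over_n])
  then have "measure P N \<le> 0" using Nb by (intro LIMSEQ_le_const) auto
  then have "measure P N = 0" using measure_nonneg[of P N] by simp
  then have Nnull: "N \<in> null_sets P" using Ns by (simp add: P.emeasure_eq_measure null_sets_def)
  show ?thesis
  proof (rule AE_I'[OF Nnull], safe)
    fix \<omega> assume w: "\<omega> \<in> space P" and nb: "\<nexists>M. \<forall>t\<ge>T0. U t \<omega> \<le> M"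
    show "\<omega> \<in> N" unfolding N_def NN_def
    proof (intro InterI, clarsimp)
      fix m
      obtain t where t: "t \<ge> T0" "\<not> U t \<omega> \<le> real (Suc m)" using nb by blast
      then have "\<omega> \<in> Hit (real (Suc m)) (t - T0)" using w by (auto simp: Hit_def intro!: bexI[of _ t])
      then show "\<exists>k. \<omega> \<in> Hit (1 + real m) k" by auto
    qed
  qed
qed


lemma main_AE: "AE \<omega> in P. (\<lambda>t. ge (F (zs \<omega>) t)) \<longlonglongrightarrow> ge fH"
  using AE_bounded AE_summable AE_space
proof (eventually_elim)
  case (elim \<omega>)
  then obtain M where M: "\<And>t. t \<ge> T0 \<Longrightarrow> U t \<omega> \<le> M" and w: "\<omega> \<in> space P"
    and sm: "summable (\<lambda>i. eta (i + T0) * ar (i + T0) \<omega>)" by blast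
  have M0: "0 \<le> M" using M[of T0] U_nonneg[OF w, of T0] by simp
  define Bn where "Bn = norm fH + sqrt M"
  have FB: "norm (F (zs \<omega>) t) \<le> Bn" if t: "t \<ge> T0" for t
  proof -
    have "Vr t \<omega> \<le> M" using M[OF t] MM_nonneg Rt_nonneg[of t] unfolding U_def
      by (smt (z3) mult_nonneg_nonneg)
    then have "norm (F (zs \<omega>) t - fH) \<le> sqrt M" unfolding Vr_def
      by (metis norm_ge_zero real_le_rsqrt)
    then show ?thesis unfolding Bn_def using norm_triangle_ineq2[of "F (zs \<omega>) t" fH] by linarith
  qed
  have Bn0: "0 \<le> Bn" unfolding Bn_def using M0 by simp
  define c1 where "c1 = (G0 + L + L * (Bn * kap)) * kap"
  define c2 where "c2 = kap * (G0 + L + L * kap * Bn)"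
  have c1: "0 \<le> c1" unfolding c1_def using G0_nonneg L_pos kap(2) Bn0 by (intro mult_nonneg_nonneg add_nonneg_nonneg) auto
  have c2: "0 \<le> c2" unfolding c2_def using G0_nonneg L_pos kap(2) Bn0 by (intro mult_nonneg_nonneg add_nonneg_nonneg) auto
  define a where "a n = ar (n + T0) \<omega>" for n
  define e where "e n = eta (n + T0)" for n
  have lim: "a \<longlonglongrightarrow> 0"
  proof (rule det_lemma[where e=e and C="c1 * c2 + 1"])
    show "\<And>t. 0 \<le> a t" unfolding a_def by (rule ar_nonneg)
    show "\<And>t. 0 \<le> e t" unfolding e_def by (rule eta_T0)
    show "summable (\<lambda>t. e t * a t)" using sm by (simp add: a_def e_def)
    have "e = (\<lambda>n. eta (n + T0))" by (simp add: e_def[abs_def])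
    then show "\<not> summable e" using eta_not_summable summable_iff_shift[of eta T0] by simp
    show "e \<longlonglongrightarrow> 0" unfolding e_def using eta_tend by (rule LIMSEQ_ignore_initial_segment)
    show "0 < c1 * c2 + 1" using c1 c2 by (simp add: add_nonneg_pos)
    fix n
    let ?t = "n + T0"
    have t1: "1 \<le> ?t" using T0(1) by simp
    have "a (Suc n) - a n = ge (F (zs \<omega>) (Suc ?t)) - ge (F (zs \<omega>) ?t)" by (simp add: a_def ar_def)
    also have "\<dots> \<le> c1 * norm (F (zs \<omega>) (Suc ?t) - F (zs \<omega>) ?t)"
      using gen_err_lip[OF FB FB, of "Suc ?t" ?t] unfolding ge_def c1_def by simp
    also have "norm (F (zs \<omega>) (Suc ?t) - F (zs \<omega>) ?t) \<le> eta ?t * kap * (G0 + L + L * kap * norm (F (zs \<omega>) ?t))"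
      by (rule step_norm[where w="zs \<omega>", OF t1 zs_mem[OF w t1]])
    also have "\<dots> \<le> eta ?t * kap * (G0 + L + L * kap * Bn)"
      using FB[of ?t] eta_T0[of n] kap(2) L_pos by (intro mult_left_mono add_left_mono) auto
    also have "eta ?t * kap * (G0 + L + L * kap * Bn) = c2 * e n" by (simp add: c2_def e_def)
    finally have "a (Suc n) - a n \<le> c1 * (c2 * e n)" using c1 by (simp add: mult_left_mono)
    also have "\<dots> \<le> (c1 * c2 + 1) * e n" using eta_T0[of n] by (simp add: e_def algebra_simps)
    finally show "a (Suc n) - a n \<le> (c1 * c2 + 1) * e n" .
  qed
  then have "(\<lambda>t. ar t \<omega>) \<longlonglongrightarrow> 0" unfolding a_def by (rule LIMSEQ_offset)
  then have "(\<lambda>t. ar t \<omega> + ge fH) \<longlonglongrightarrow> 0 + ge fH" by (intro tendsto_intros)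
  then show ?case by (simp add: ar_def)
qed

end
theorem theorem3:
  fixes X :: "'a::euclidean_space set" and Y :: "real set"
    and rho :: "('a \<times> real) measure"
    and K :: "'a \<Rightarrow> 'a \<Rightarrow> real" and Phi :: "'a \<Rightarrow> 'h::{real_inner, complete_space}"
    and phi dphi :: "real \<Rightarrow> real \<Rightarrow> real"
    and alpha L :: real
    and fH :: 'h
    and P :: "'w measure" and Z :: "nat \<Rightarrow> 'w \<Rightarrow> 'a \<times> real"
    and eta :: "nat \<Rightarrow> real"
  assumes rho_space: "space rho = X \<times> Y"
    and rho_sets: "sets rho = sets (restrict_space borel (X \<times> Y))"
    and rho_prob: "prob_space rho"
    and K_feature: "\<forall>x\<in>X. \<forall>x'\<in>X. K x x' = inner (Phi x) (Phi x')"
    and K_cont: "continuous_on (X \<times> X) (\<lambda>(x, x'). K x x')"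
    and kappa_fin: "bdd_above ((\<lambda>x. sqrt (K x x)) ` X)"
    and phi_nonneg: "\<forall>y\<in>Y. \<forall>s. 0 \<le> phi y s"
    and phi_meas: "(\<lambda>(y, s). phi y s) \<in> borel_measurable (restrict_space borel (Y \<times> UNIV))"
    and phi_deriv: "\<forall>y\<in>Y. \<forall>s. (phi y has_real_derivative dphi y s) (at s)"
    and phi_convex: "\<forall>y\<in>Y. convex_on UNIV (phi y)"
    and alpha: "0 < alpha" "alpha \<le> 1" and L_pos: "0 < L"
    and holder: "\<forall>y\<in>Y. \<forall>s s'. \<bar>dphi y s - dphi y s'\<bar> \<le> L * \<bar>s - s'\<bar> powr alpha"
    and fH_min: "\<forall>h. gen_err rho phi (rkhs_fun Phi fH) \<le> gen_err rho phi (rkhs_fun Phi h)"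
    and phi0_bdd: "bdd_above ((\<lambda>y. phi y 0) ` Y)"
    and phifH_bdd: "bdd_above ((\<lambda>(x, y). phi y (rkhs_fun Phi fH x)) ` (X \<times> Y))"
    and P_prob: "prob_space P"
    and Z_indep: "prob_space.indep_vars P (\<lambda>_. rho) Z {1..}"
    and Z_distr: "\<forall>t\<ge>1. distr P rho (Z t) = rho"
    and eta_pos: "\<forall>t\<ge>1. 0 < eta t"
    and eta_div: "\<not> summable (\<lambda>t. eta (t + 1))"
    and eta_sum: "summable (\<lambda>t. eta (t + 1) powr (1 + alpha))"
  shows "AE \<omega> in P.
           (\<lambda>t. gen_err rho phi (rkhs_fun Phi (ogd Phi dphi eta (\<lambda>i. Z i \<omega>) t)))
             \<longlonglongrightarrow> gen_err rho phi (rkhs_fun Phi fH)"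
proof -
  have loc: "ogd_set X Y rho K Phi phi dphi alpha L fH P Z eta"
    unfolding ogd_set_def using assms by (intro conjI) assumption+
  interpret ogd_set X Y rho K Phi phi dphi alpha L fH P Z eta by (rule loc)
  from main_AE show ?thesis by (simp add: ge_def zs_def)
qed

end
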